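(* (1) Let $f\colon Z\to X$ be a fibration, with basepoints $\dagger\in Z$, $*\in X$. Then the biset of $f$ can be described as \[B(f)=\{\beta\colon[0,1]\to Z\mid\beta(0)=\dagger,\ f(\beta(1))=*\}/{\sim},\] where $\beta\sim\beta'$ if and only if there is a path $\varepsilon\colon[0,1]\to f^{-1}( * )$ from $\beta(1)$ to $\beta'(1)$ such that $\beta\#\varepsilon$ is homotopic (rel endpoints) to $\beta'$. (2) Let $(Z,f,i)$ be a correspondence from $Y$ to $X$ with $f$ fibrant and basepoints $\dagger\in Y$, $*\in X$. Then in the triple description of $B(f,i)$ one may assume that $\gamma$ is constant, and \[B(f,i)=\{(\delta\colon[0,1]\to Y,\ p\in Z)\mid\delta(0)=\dagger,\ \delta(1)=i(p),\ f(p)=*\}/{\sim},\] where $(\delta,p)\sim(\delta',p')$ if and only if there is a path $\varepsilon\colon[0,1]\to f^{-1}( * )$ from $p$ to $p'$ such that $\delta\#i(\varepsilon)$ is homotopic to $\delta'$.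
   Context: For a continuous map $f\colon Z\to X$ and basepoints $\dagger\in Z$, $*\in X$, the biset $B(f)=B(f,\dagger,* )$ is the set of homotopy classes rel endpoints of paths $\gamma$ in $X$ from $f(\dagger)$ to $*$, a $\pi_1(Z,\dagger)$-$\pi_1(X,* )$-biset via $[\lambda]\cdot[\gamma]=[f\circ\lambda\#\gamma]$ and $[\gamma]\cdot[\mu]=[\gamma\#\mu]$. For a correspondence $(Z,f,i)$ from $Y$ to $X$ ($f\colon Z\to X$, $i\colon Z\to Y$), $B(f,i)$ is the set of triples $(\delta,p,\gamma)$ with $p\in Z$, $\delta$ a path in $Y$ from $\dagger$ to $i(p)$, $\gamma$ a path in $X$ from $f(p)$ to $*$, modulo homotopy of triples (with $p$ moving continuously, outer endpoints fixed). A fibration is a map with the homotopy lifting property with respect to all spaces. $\#$ denotes concatenation of paths. *)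

theory Defs
  imports "HOL-Analysis.Analysis"
begin

abbreviation unitI :: "real topology" where
  "unitI \<equiv> top_of_set {0..1}"

text \<open>Concatenation of paths (the library's joinpaths needs a type class; here the
  same formula for paths in abstract topological spaces).\<close>
definition pjoin :: "(real \<Rightarrow> 'a) \<Rightarrow> (real \<Rightarrow> 'a) \<Rightarrow> real \<Rightarrow> 'a" (infixr \<open>#\<^sub>p\<close> 75) where
  "g1 #\<^sub>p g2 = (\<lambda>x. if x \<le> 1/2 then g1 (2 * x) else g2 (2 * x - 1))"

definition homotopic_rel_ends :: "'a topology \<Rightarrow> (real \<Rightarrow> 'a) \<Rightarrow> (real \<Rightarrow> 'a) \<Rightarrow> bool" where
  "homotopic_rel_ends X p q \<longleftrightarrow>
     homotopic_with (\<lambda>r. r 0 = p 0 \<and> r 1 = p 1) unitI X p q"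

definition HLP_wrt :: "'w topology \<Rightarrow> 'z topology \<Rightarrow> 'x topology \<Rightarrow> ('z \<Rightarrow> 'x) \<Rightarrow> bool" where
  "HLP_wrt W Z X f \<longleftrightarrow>
    (\<forall>g h. continuous_map W Z g \<and>
           continuous_map (prod_topology W unitI) X h \<and>
           (\<forall>w\<in>topspace W. h (w, 0) = f (g w))
       \<longrightarrow> (\<exists>H. continuous_map (prod_topology W unitI) Z H \<and>
               (\<forall>w\<in>topspace W. H (w, 0) = g w) \<and>
               (\<forall>y\<in>topspace (prod_topology W unitI). f (H y) = h y)))"

text \<open>Fibration: homotopy lifting property with respect to all spaces.  Spaces are
  taken with carrier in the (large) universe type real set.\<close>
definition fibration :: "'z topology \<Rightarrow> 'x topology \<Rightarrow> ('z \<Rightarrow> 'x) \<Rightarrow> bool" where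
  "fibration Z X f \<longleftrightarrow> continuous_map Z X f \<and> (\<forall>W :: real set topology. HLP_wrt W Z X f)"

definition Bpaths :: "'x topology \<Rightarrow> ('z \<Rightarrow> 'x) \<Rightarrow> 'z \<Rightarrow> 'x \<Rightarrow> (real \<Rightarrow> 'x) set" where
  "Bpaths X f dag star = {\<gamma>. pathin X \<gamma> \<and> \<gamma> 0 = f dag \<and> \<gamma> 1 = star}"

definition path_htp_rel :: "'x topology \<Rightarrow> (real \<Rightarrow> 'x) set \<Rightarrow> ((real \<Rightarrow> 'x) \<times> (real \<Rightarrow> 'x)) set" where
  "path_htp_rel X P = {(\<gamma>, \<gamma>'). \<gamma> \<in> P \<and> \<gamma>' \<in> P \<and> homotopic_rel_ends X \<gamma> \<gamma>'}"

definition biset :: "'x topology \<Rightarrow> ('z \<Rightarrow> 'x) \<Rightarrow> 'z \<Rightarrow> 'x \<Rightarrow> (real \<Rightarrow> 'x) set set" where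
  "biset X f dag star = Bpaths X f dag star // path_htp_rel X (Bpaths X f dag star)"

definition fib_paths :: "'z topology \<Rightarrow> ('z \<Rightarrow> 'x) \<Rightarrow> 'z \<Rightarrow> 'x \<Rightarrow> (real \<Rightarrow> 'z) set" where
  "fib_paths Z f dag star = {\<beta>. pathin Z \<beta> \<and> \<beta> 0 = dag \<and> f (\<beta> 1) = star}"

definition fib_rel :: "'z topology \<Rightarrow> ('z \<Rightarrow> 'x) \<Rightarrow> 'z \<Rightarrow> 'x \<Rightarrow> ((real \<Rightarrow> 'z) \<times> (real \<Rightarrow> 'z)) set" where
  "fib_rel Z f dag star =
     {(\<beta>, \<beta>'). \<beta> \<in> fib_paths Z f dag star \<and> \<beta>' \<in> fib_paths Z f dag star \<and>
        (\<exists>\<epsilon>. pathin (subtopology Z {z. f z = star}) \<epsilon> \<and> \<epsilon> 0 = \<beta> 1 \<and> \<epsilon> 1 = \<beta>' 1 \<and>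
             homotopic_rel_ends Z (\<beta> #\<^sub>p \<epsilon>) \<beta>')}"

definition triples ::
  "'y topology \<Rightarrow> 'z topology \<Rightarrow> 'x topology \<Rightarrow> ('z \<Rightarrow> 'x) \<Rightarrow> ('z \<Rightarrow> 'y) \<Rightarrow> 'y \<Rightarrow> 'x
   \<Rightarrow> ((real \<Rightarrow> 'y) \<times> 'z \<times> (real \<Rightarrow> 'x)) set" where
  "triples Y Z X f i dag star =
     {(\<delta>, p, \<gamma>). p \<in> topspace Z \<and> pathin Y \<delta> \<and> \<delta> 0 = dag \<and> \<delta> 1 = i p \<and>
                 pathin X \<gamma> \<and> \<gamma> 0 = f p \<and> \<gamma> 1 = star}"

definition triple_rel ::
  "'y topology \<Rightarrow> 'z topology \<Rightarrow> 'x topology \<Rightarrow> ('z \<Rightarrow> 'x) \<Rightarrow> ('z \<Rightarrow> 'y) \<Rightarrow> 'y \<Rightarrow> 'x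
   \<Rightarrow> (((real \<Rightarrow> 'y) \<times> 'z \<times> (real \<Rightarrow> 'x)) \<times> ((real \<Rightarrow> 'y) \<times> 'z \<times> (real \<Rightarrow> 'x))) set" where
  "triple_rel Y Z X f i dag star =
     {((\<delta>, p, \<gamma>), (\<delta>', p', \<gamma>')).
        (\<delta>, p, \<gamma>) \<in> triples Y Z X f i dag star \<and> (\<delta>', p', \<gamma>') \<in> triples Y Z X f i dag star \<and>
        (\<exists>D P G. continuous_map (prod_topology unitI unitI) Y D \<and>
                 pathin Z P \<and>
                 continuous_map (prod_topology unitI unitI) X G \<and>
                 P 0 = p \<and> P 1 = p' \<and>
                 (\<forall>s\<in>{0..1}. D (s, 0) = \<delta> s \<and> D (s, 1) = \<delta>' s \<and>
                              G (s, 0) = \<gamma> s \<and> G (s, 1) = \<gamma>' s) \<and>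
                 (\<forall>t\<in>{0..1}. D (0, t) = dag \<and> D (1, t) = i (P t) \<and>
                              G (0, t) = f (P t) \<and> G (1, t) = star))}"

definition biset_corr ::
  "'y topology \<Rightarrow> 'z topology \<Rightarrow> 'x topology \<Rightarrow> ('z \<Rightarrow> 'x) \<Rightarrow> ('z \<Rightarrow> 'y) \<Rightarrow> 'y \<Rightarrow> 'x
   \<Rightarrow> ((real \<Rightarrow> 'y) \<times> 'z \<times> (real \<Rightarrow> 'x)) set set" where
  "biset_corr Y Z X f i dag star =
     triples Y Z X f i dag star // triple_rel Y Z X f i dag star"

definition red_pairs ::
  "'y topology \<Rightarrow> 'z topology \<Rightarrow> ('z \<Rightarrow> 'x) \<Rightarrow> ('z \<Rightarrow> 'y) \<Rightarrow> 'y \<Rightarrow> 'x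
   \<Rightarrow> ((real \<Rightarrow> 'y) \<times> 'z) set" where
  "red_pairs Y Z f i dag star =
     {(\<delta>, p). p \<in> topspace Z \<and> pathin Y \<delta> \<and> \<delta> 0 = dag \<and> \<delta> 1 = i p \<and> f p = star}"

definition red_rel ::
  "'y topology \<Rightarrow> 'z topology \<Rightarrow> ('z \<Rightarrow> 'x) \<Rightarrow> ('z \<Rightarrow> 'y) \<Rightarrow> 'y \<Rightarrow> 'x
   \<Rightarrow> (((real \<Rightarrow> 'y) \<times> 'z) \<times> ((real \<Rightarrow> 'y) \<times> 'z)) set" where
  "red_rel Y Z f i dag star =
     {((\<delta>, p), (\<delta>', p')).
        (\<delta>, p) \<in> red_pairs Y Z f i dag star \<and> (\<delta>', p') \<in> red_pairs Y Z f i dag star \<and>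
        (\<exists>\<epsilon>. pathin (subtopology Z {z. f z = star}) \<epsilon> \<and> \<epsilon> 0 = p \<and> \<epsilon> 1 = p' \<and>
             homotopic_rel_ends Y (\<delta> #\<^sub>p (i \<circ> \<epsilon>)) \<delta>')}"

end

theory Submission
  imports Defs
begin

abbreviation SQ :: "(real \<times> real) set" where "SQ \<equiv> {0..1} \<times> {0..1}"

lemma cmc:
  assumes "continuous_map (top_of_set T) Z H" "continuous_on S a" "a ` S \<subseteq> T"
  shows "continuous_map (top_of_set S) Z (\<lambda>x. H (a x))"
proof -
  have "continuous_map (top_of_set S) (top_of_set T) a"
    using assms(2,3) by (auto simp: continuous_map_in_subtopology)
  from continuous_map_compose[OF this assms(1)] show ?thesis by (simp add: o_def)
qed

lemma paste2:
  assumes A: "closed A" and B: "closed B"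
    and f: "continuous_map (top_of_set (S \<inter> A)) Z f"
    and g: "continuous_map (top_of_set (S \<inter> B)) Z g"
    and cov: "S \<subseteq> A \<union> B" and eq: "\<And>x. x \<in> S \<Longrightarrow> x \<in> A \<Longrightarrow> x \<in> B \<Longrightarrow> f x = g x"
  shows "continuous_map (top_of_set S) Z (\<lambda>x. if x \<in> A then f x else g x)"
proof (rule pasting_lemma_closed[where I="{True,False}" and T="\<lambda>b. if b then S \<inter> A else S \<inter> B"
      and f="\<lambda>b. if b then f else g"])
  show "closedin (top_of_set S) (if b then S \<inter> A else S \<inter> B)" if "b \<in> {True, False}" for b
    using A B closedin_closed_Int[of A S] closedin_closed_Int[of B S] by (auto simp: Int_commute)
  show "continuous_map (subtopology (top_of_set S) (if b then S \<inter> A else S \<inter> B)) Z (if b then f else g)"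
    if "b \<in> {True, False}" for b
    using f g by (auto simp: subtopology_subtopology Int_absorb1)
qed (use cov eq in auto)

lemma hre_intro:
  assumes "continuous_map (top_of_set SQ) Z h"
    "\<And>x. x\<in>{0..1} \<Longrightarrow> h(0,x) = p x" "\<And>x. x\<in>{0..1} \<Longrightarrow> h(1,x) = q x"
    "\<And>t. t\<in>{0..1} \<Longrightarrow> h(t,0) = p 0 \<and> h(t,1) = p 1"
  shows "homotopic_rel_ends Z p q"
proof -
  have P: "\<And>h k. (\<And>x. x \<in> topspace unitI \<Longrightarrow> h x = k x) \<Longrightarrow> (h 0 = p 0 \<and> h 1 = p 1) = (k 0 = p 0 \<and> k 1 = p 1)"
    by simp
  have eq: "homotopic_with (\<lambda>r. r 0 = p 0 \<and> r 1 = p 1) unitI Z p q \<longleftrightarrow>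
           (\<exists>h. continuous_map (prod_topology unitI unitI) Z h \<and>
              (\<forall>x \<in> topspace unitI. h(0,x) = p x) \<and>
              (\<forall>x \<in> topspace unitI. h(1,x) = q x) \<and>
              (\<forall>t \<in> {0..1}. h(t,0) = p 0 \<and> h(t,1) = p 1))"
    by (rule homotopic_with) (use P in blast)
  show ?thesis unfolding homotopic_rel_ends_def eq
  proof (intro exI[of _ h] conjI ballI)
    show "continuous_map (prod_topology unitI unitI) Z h" using assms(1) by simp
  qed (use assms(2-4) in auto)
qed

lemma hre_ex:
  assumes "homotopic_rel_ends Z p q"
  shows "\<exists>h. continuous_map (top_of_set SQ) Z h \<and>
    (\<forall>x. h(0,x) = p x) \<and> (\<forall>x. h(1,x) = q x) \<and>
    (\<forall>t\<in>{0..1}. h(t,0) = p 0 \<and> h(t,1) = p 1)"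
  using assms unfolding homotopic_rel_ends_def homotopic_with_def by simp

lemma hre_ends: assumes "homotopic_rel_ends Z p q" shows "q 0 = p 0 \<and> q 1 = p 1"
proof -
  obtain h :: "real \<times> real \<Rightarrow> _" where h1: "\<forall>x. h(1,x) = q x" and h2: "\<forall>t\<in>{0..1}. h(t,0) = p 0 \<and> h(t,1) = p 1"
    using hre_ex[OF assms] by blast
  have "h(1,0) = p 0 \<and> h(1,1) = p 1" using h2 by simp
  then show ?thesis using h1 by simp
qed

lemma hre_pathin: "homotopic_rel_ends Z p q \<Longrightarrow> pathin Z p \<and> pathin Z q"
  unfolding homotopic_rel_ends_def pathin_def by (rule homotopic_with_imp_continuous_maps)

lemma hre_refl: "pathin Z p \<Longrightarrow> homotopic_rel_ends Z p p"
  unfolding homotopic_rel_ends_def pathin_def by simp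

lemma hre_sym:
  assumes "homotopic_rel_ends Z p q" shows "homotopic_rel_ends Z q p"
proof -
  from hre_ex[OF assms] obtain h where h: "continuous_map (top_of_set SQ) Z h"
    "\<forall>x. h(0,x) = p x" "\<forall>x. h(1,x) = q x"
    "\<forall>t\<in>{0..1}. h(t,0) = p 0 \<and> h(t,1) = p 1"
    by blast
  have e: "q 0 = p 0" "q 1 = p 1" using hre_ends[OF assms] by auto
  show ?thesis
  proof (rule hre_intro[where h="\<lambda>y. h(1 - fst y, snd y)"])
    show "continuous_map (top_of_set SQ) Z (\<lambda>y. h(1 - fst y, snd y))"
      by (rule cmc[OF h(1)]) (auto intro!: continuous_intros)
  qed (use h e in auto)
qed

lemma hre_trans:
  assumes "homotopic_rel_ends Z p q" "homotopic_rel_ends Z q r" shows "homotopic_rel_ends Z p r"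
proof -
  from hre_ex[OF assms(1)] obtain h where h: "continuous_map (top_of_set SQ) Z h"
    "\<forall>x. h(0,x) = p x" "\<forall>x. h(1,x) = q x"
    "\<forall>t\<in>{0..1}. h(t,0) = p 0 \<and> h(t,1) = p 1"
    by blast
  from hre_ex[OF assms(2)] obtain k where k: "continuous_map (top_of_set SQ) Z k"
    "\<forall>x. k(0,x) = q x" "\<forall>x. k(1,x) = r x"
    "\<forall>t\<in>{0..1}. k(t,0) = q 0 \<and> k(t,1) = q 1"
    by blast
  have e: "q 0 = p 0" "q 1 = p 1" using hre_ends[OF assms(1)] by auto
  let ?H = "\<lambda>y. if y \<in> {y. fst y \<le> 1/2} then h(2 * fst y, snd y) else k(2 * fst y - 1, snd y)"
  have c: "continuous_map (top_of_set SQ) Z ?H"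
  proof (rule paste2[where A="{y. fst y \<le> 1/2}" and B="{y. fst y \<ge> 1/2}"])
    show "closed {y::real\<times>real. fst y \<le> 1/2}" by (intro closed_Collect_le continuous_intros)
    show "closed {y::real\<times>real. fst y \<ge> 1/2}" by (intro closed_Collect_le continuous_intros)
    show "continuous_map (top_of_set (SQ \<inter> {y. fst y \<le> 1 / 2})) Z (\<lambda>y. h (2 * fst y, snd y))"
      by (rule cmc[OF h(1)]) (auto intro!: continuous_intros)
    show "continuous_map (top_of_set (SQ \<inter> {y. fst y \<ge> 1 / 2})) Z (\<lambda>y. k (2 * fst y - 1, snd y))"
      by (rule cmc[OF k(1)]) (auto intro!: continuous_intros)
    show "h (2 * fst y, snd y) = k (2 * fst y - 1, snd y)" if "y \<in> SQ" "y \<in> {y. fst y \<le> 1/2}" "y \<in> {y. fst y \<ge> 1/2}" for y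
    proof -
      have "fst y = 1/2" using that by auto
      then have a: "2 * fst y = 1" and b: "2 * fst y - 1 = 0" by simp_all
      have "h (2 * fst y, snd y) = h(1, snd y)" by (simp only: a)
      also have "\<dots> = k(0, snd y)" using h(3) k(2) by simp
      also have "\<dots> = k(2 * fst y - 1, snd y)" by (simp only: b)
      finally show ?thesis .
    qed
    show "SQ \<subseteq> {y. fst y \<le> 1/2} \<union> {y. fst y \<ge> 1/2}" by auto
  qed
  show ?thesis
  proof (rule hre_intro[OF c])
    fix x :: real
    show "?H (0, x) = p x" using h(2) by simp
    show "?H (1, x) = r x" using k(3) by simp
  next
    fix t :: real assume t: "t \<in> {0..1}"
    show "?H (t, 0) = p 0 \<and> ?H (t, 1) = p 1"
    proof (cases "t \<le> 1/2")
      case True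
      then have "2 * t \<in> {0..1}" using t by auto
      then have hh: "h(2*t,0) = p 0 \<and> h(2*t,1) = p 1" using h(4) by blast
      show ?thesis using hh True by simp
    next
      case False
      then have "2 * t - 1 \<in> {0..1}" using t by auto
      then have kk: "k(2*t-1,0) = p 0 \<and> k(2*t-1,1) = p 1" using k(4) e by metis
      show ?thesis using kk False by simp
    qed
  qed
qed

lemma hre_eq:
  assumes "homotopic_rel_ends Z p q" "\<And>x. x\<in>{0..1} \<Longrightarrow> p' x = p x" "\<And>x. x\<in>{0..1} \<Longrightarrow> q' x = q x"
  shows "homotopic_rel_ends Z p' q'"
proof -
  from hre_ex[OF assms(1)] obtain h where h: "continuous_map (top_of_set SQ) Z h"
    "\<forall>x. h(0,x) = p x" "\<forall>x. h(1,x) = q x"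
    "\<forall>t\<in>{0..1}. h(t,0) = p 0 \<and> h(t,1) = p 1"
    by blast
  show ?thesis by (rule hre_intro[OF h(1)]) (use h assms(2,3) in auto)
qed

lemma hre_compose:
  assumes "homotopic_rel_ends Z p q" "continuous_map Z Y k"
  shows "homotopic_rel_ends Y (k \<circ> p) (k \<circ> q)"
proof -
  from hre_ex[OF assms(1)] obtain h where h: "continuous_map (top_of_set SQ) Z h"
    "\<forall>x. h(0,x) = p x" "\<forall>x. h(1,x) = q x"
    "\<forall>t\<in>{0..1}. h(t,0) = p 0 \<and> h(t,1) = p 1"
    by blast
  show ?thesis by (rule hre_intro[OF continuous_map_compose[OF h(1) assms(2)]]) (use h in auto)
qed

lemma hre_convex:
  fixes a b :: "real \<Rightarrow> 'v::real_normed_vector"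
  assumes S: "convex S" and Q: "continuous_map (top_of_set S) Z Q"
    and a: "continuous_on {0..1} a" "a ` {0..1} \<subseteq> S"
    and b: "continuous_on {0..1} b" "b ` {0..1} \<subseteq> S"
    and e: "a 0 = b 0" "a 1 = b 1"
    and p: "\<And>x. x\<in>{0..1} \<Longrightarrow> p x = Q (a x)"
    and q: "\<And>x. x\<in>{0..1} \<Longrightarrow> q x = Q (b x)"
  shows "homotopic_rel_ends Z p q"
proof (rule hre_intro[where h="\<lambda>y. Q ((1 - fst y) *\<^sub>R a (snd y) + fst y *\<^sub>R b (snd y))"])
  show "continuous_map (top_of_set SQ) Z (\<lambda>y. Q ((1 - fst y) *\<^sub>R a (snd y) + fst y *\<^sub>R b (snd y)))"
  proof (rule cmc[OF Q])
    show "continuous_on SQ (\<lambda>y. (1 - fst y) *\<^sub>R a (snd y) + fst y *\<^sub>R b (snd y))"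
      by (intro continuous_intros continuous_on_compose2[OF a(1)] continuous_on_compose2[OF b(1)]) auto
    show "(\<lambda>y. (1 - fst y) *\<^sub>R a (snd y) + fst y *\<^sub>R b (snd y)) ` SQ \<subseteq> S"
    proof clarify
      fix t x :: real assume "t \<in> {0..1}" "x \<in> {0..1}"
      then show "(1 - fst (t,x)) *\<^sub>R a (snd (t,x)) + fst (t,x) *\<^sub>R b (snd (t,x)) \<in> S"
        using a(2) b(2) convexD_alt[OF S] by (auto simp: image_subset_iff)
    qed
  qed
qed (use p q e in auto)

lemma half_eq:
  fixes x :: real assumes "x \<le> 1/2" "x \<ge> 1/2" shows "2 * x = 1" "2 * x - 1 = 0"
  using assms by auto

lemma pathin_pjoin:
  assumes p: "pathin Z p" and q: "pathin Z q" and e: "p 1 = q 0"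
  shows "pathin Z (p #\<^sub>p q)"
proof -
  have "continuous_map (top_of_set {0..1}) Z (\<lambda>x. if x \<in> {x. x \<le> 1/2} then p (2*x) else q (2*x - 1))"
  proof (rule paste2[where A="{x. x \<le> 1/2}" and B="{x. x \<ge> 1/2}"])
    show "closed {x::real. x \<le> 1/2}" by (intro closed_Collect_le continuous_intros)
    show "closed {x::real. x \<ge> 1/2}" by (intro closed_Collect_le continuous_intros)
    show "continuous_map (top_of_set ({0..1} \<inter> {x. x \<le> 1/2})) Z (\<lambda>x. p (2*x))"
      using p unfolding pathin_def by (rule cmc) (auto intro!: continuous_intros)
    show "continuous_map (top_of_set ({0..1} \<inter> {x. x \<ge> 1/2})) Z (\<lambda>x. q (2*x - 1))"
      using q unfolding pathin_def by (rule cmc) (auto intro!: continuous_intros)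
    show "p (2*x) = q (2*x - 1)" if "x \<in> {0..1}" "x \<in> {x. x \<le> 1/2}" "x \<in> {x. x \<ge> 1/2}" for x :: real
    proof -
      have a: "2*x = 1" and b: "2*x - 1 = 0" using that by auto
      show ?thesis using e by (simp add: a)
    qed
    show "{0..1::real} \<subseteq> {x. x \<le> 1/2} \<union> {x. x \<ge> 1/2}" by auto
  qed
  then show ?thesis unfolding pathin_def pjoin_def by simp
qed

lemma pathin_rev: "pathin Z p \<Longrightarrow> pathin Z (\<lambda>x. p (1 - x))"
  unfolding pathin_def by (rule cmc) (auto intro!: continuous_intros)

lemma hre_reparam:
  assumes r: "pathin Z r" and a: "continuous_on {0..1} a" "a ` {0..1} \<subseteq> {0..1}"
    and b: "continuous_on {0..1} b" "b ` {0..1} \<subseteq> {0..1}"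
    and e: "a 0 = b 0" "a 1 = b 1"
    and p: "\<And>x. x \<in> {0..1} \<Longrightarrow> p x = r (a x)" and q: "\<And>x. x \<in> {0..1} \<Longrightarrow> q x = r (b x)"
  shows "homotopic_rel_ends Z p q"
proof (rule hre_convex[where S="{0..1::real}" and Q=r and a=a and b=b])
  show "continuous_map (top_of_set {0..1}) Z r" using r unfolding pathin_def .
qed (use a b e p q in auto)

lemma hre_runit:
  assumes p: "pathin Z p" and e: "\<And>x. x \<in> {0..1} \<Longrightarrow> e x = p 1"
  shows "homotopic_rel_ends Z (p #\<^sub>p e) p"
proof (rule hre_reparam[OF p, where a="\<lambda>x. min (2*x) 1" and b="\<lambda>x. x"])
  show "(p #\<^sub>p e) x = p (min (2 * x) 1)" if "x \<in> {0..1}" for x :: real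
  proof (cases "x \<le> 1/2")
    case True then show ?thesis by (simp add: pjoin_def)
  next
    case False
    then have "2*x - 1 \<in> {0..1}" "min (2*x) 1 = 1" using that by auto
    then show ?thesis using False e by (simp add: pjoin_def)
  qed
qed (auto intro!: continuous_intros)

lemma hre_lunit:
  assumes p: "pathin Z p" and e: "\<And>x. x \<in> {0..1} \<Longrightarrow> e x = p 0"
  shows "homotopic_rel_ends Z (e #\<^sub>p p) p"
proof (rule hre_reparam[OF p, where a="\<lambda>x. max 0 (2*x - 1)" and b="\<lambda>x. x"])
  show "(e #\<^sub>p p) x = p (max 0 (2*x - 1))" if "x \<in> {0..1}" for x :: real
  proof (cases "x \<le> 1/2")
    case True
    then have "2*x \<in> {0..1}" "max 0 (2*x - 1) = 0" using that by auto
    then show ?thesis using True e by (simp add: pjoin_def)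
  next
    case False
    then show ?thesis by (simp add: pjoin_def)
  qed
qed (auto intro!: continuous_intros)

lemma hre_assoc:
  assumes a: "pathin Z a" and b: "pathin Z b" and c: "pathin Z c" and ab: "a 1 = b 0" and bc: "b 1 = c 0"
  shows "homotopic_rel_ends Z (a #\<^sub>p (b #\<^sub>p c)) ((a #\<^sub>p b) #\<^sub>p c)"
proof (rule hre_reparam[where r="(a #\<^sub>p b) #\<^sub>p c" and a="\<lambda>x. max (max (x/2) (x - 1/4)) (2*x - 1)" and b="\<lambda>x. x"])
  show "pathin Z ((a #\<^sub>p b) #\<^sub>p c)"
    using a b c ab bc by (intro pathin_pjoin) (auto simp: pjoin_def)
  show "(a #\<^sub>p (b #\<^sub>p c)) x = ((a #\<^sub>p b) #\<^sub>p c) (max (max (x/2) (x - 1/4)) (2*x - 1))" if "x \<in> {0..1}" for x :: real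
  proof -
    consider "x \<le> 1/2" | "1/2 < x" "x \<le> 3/4" | "3/4 < x" by linarith
    then show ?thesis
    proof cases
      case 1
      then have m: "max (max (x/2) (x - 1/4)) (2*x - 1) = x/2" by auto
      show ?thesis unfolding m using 1 by (simp add: pjoin_def)
    next
      case 2
      then have m: "max (max (x/2) (x - 1/4)) (2*x - 1) = x - 1/4" by auto
      have e1: "2 * (2 * (x - 1/4)) - 1 = 2 * (2 * x - 1)" by algebra
      show ?thesis unfolding m using 2 e1 by (simp add: pjoin_def)
    next
      case 3
      then have m: "max (max (x/2) (x - 1/4)) (2*x - 1) = 2*x - 1" by auto
      have e1: "2 * (2 * x - 1) - 1 = 2 * (2 * x - 1) - 1" by simp
      show ?thesis unfolding m using 3 by (simp add: pjoin_def)
    qed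
  qed
qed (auto intro!: continuous_intros)

lemma hre_rinv:
  assumes p: "pathin Z p"
  shows "homotopic_rel_ends Z (p #\<^sub>p (\<lambda>x. p (1 - x))) (\<lambda>_. p 0)"
proof (rule hre_reparam[OF p, where a="\<lambda>x. 1 - \<bar>2*x - 1\<bar>" and b="\<lambda>x. 0"])
  show "(p #\<^sub>p (\<lambda>x. p (1 - x))) x = p (1 - \<bar>2*x - 1\<bar>)" if "x \<in> {0..1}" for x :: real
  proof (cases "x \<le> 1/2")
    case True
    then have "1 - \<bar>2*x - 1\<bar> = 2*x" by auto
    then show ?thesis using True by (simp add: pjoin_def)
  next
    case False
    then have "1 - \<bar>2*x - 1\<bar> = 1 - (2*x - 1)" by auto
    then show ?thesis using False by (simp add: pjoin_def)
  qed
qed (auto intro!: continuous_intros)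

lemma hre_linv:
  assumes p: "pathin Z p"
  shows "homotopic_rel_ends Z ((\<lambda>x. p (1 - x)) #\<^sub>p p) (\<lambda>_. p 1)"
proof (rule hre_reparam[OF p, where a="\<lambda>x. \<bar>2*x - 1\<bar>" and b="\<lambda>x. 1"])
  show "((\<lambda>x. p (1 - x)) #\<^sub>p p) x = p (\<bar>2*x - 1\<bar>)" if "x \<in> {0..1}" for x :: real
  proof (cases "x \<le> 1/2")
    case True
    then have "\<bar>2*x - 1\<bar> = 1 - 2*x" by auto
    then show ?thesis using True by (simp add: pjoin_def)
  next
    case False
    then have "\<bar>2*x - 1\<bar> = 2*x - 1" by auto
    then show ?thesis using False by (simp add: pjoin_def)
  qed
qed (auto intro!: continuous_intros)

lemma hre_join_left:
  assumes H: "homotopic_rel_ends Z p p'" and q: "pathin Z q" and e: "q 0 = p 1"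
  shows "homotopic_rel_ends Z (p #\<^sub>p q) (p' #\<^sub>p q)"
proof -
  from hre_ex[OF H] obtain h where h: "continuous_map (top_of_set SQ) Z h"
    "\<forall>x. h(0,x) = p x" "\<forall>x. h(1,x) = p' x"
    "\<forall>t\<in>{0..1}. h(t,0) = p 0 \<and> h(t,1) = p 1"
    by blast
  let ?H = "\<lambda>y. if y \<in> {y. snd y \<le> 1/2} then h(fst y, 2 * snd y) else q(2 * snd y - 1)"
  have c: "continuous_map (top_of_set SQ) Z ?H"
  proof (rule paste2[where A="{y. snd y \<le> 1/2}" and B="{y. snd y \<ge> 1/2}"])
    show "closed {y::real\<times>real. snd y \<le> 1/2}" by (intro closed_Collect_le continuous_intros)
    show "closed {y::real\<times>real. snd y \<ge> 1/2}" by (intro closed_Collect_le continuous_intros)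
    show "continuous_map (top_of_set (SQ \<inter> {y. snd y \<le> 1 / 2})) Z (\<lambda>y. h (fst y, 2 * snd y))"
      by (rule cmc[OF h(1)]) (auto intro!: continuous_intros)
    show "continuous_map (top_of_set (SQ \<inter> {y. snd y \<ge> 1 / 2})) Z (\<lambda>y. q (2 * snd y - 1))"
      using q unfolding pathin_def by (rule cmc) (auto intro!: continuous_intros)
    show "h (fst y, 2 * snd y) = q (2 * snd y - 1)" if "y \<in> SQ" "y \<in> {y. snd y \<le> 1/2}" "y \<in> {y. snd y \<ge> 1/2}" for y
    proof -
      have a: "2 * snd y = 1" using that by auto
      have "fst y \<in> {0..1}" using that by auto
      then have "h (fst y, 1) = p 1" using h(4) by blast
      then show ?thesis using e by (simp add: a)
    qed
    show "SQ \<subseteq> {y. snd y \<le> 1/2} \<union> {y. snd y \<ge> 1/2}" by auto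
  qed
  show ?thesis
  proof (rule hre_intro[OF c])
    fix x :: real
    show "?H (0, x) = (p #\<^sub>p q) x" using h(2) by (simp add: pjoin_def)
    show "?H (1, x) = (p' #\<^sub>p q) x" using h(3) by (simp add: pjoin_def)
  next
    fix t :: real assume t: "t \<in> {0..1}"
    then have "h (t, 0) = p 0" using h(4) by blast
    then show "?H (t, 0) = (p #\<^sub>p q) 0 \<and> ?H (t, 1) = (p #\<^sub>p q) 1" by (simp add: pjoin_def)
  qed
qed

lemma hre_join_right:
  assumes H: "homotopic_rel_ends Z q q'" and p: "pathin Z p" and e: "q 0 = p 1"
  shows "homotopic_rel_ends Z (p #\<^sub>p q) (p #\<^sub>p q')"
proof -
  from hre_ex[OF H] obtain h where h: "continuous_map (top_of_set SQ) Z h"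
    "\<forall>x. h(0,x) = q x" "\<forall>x. h(1,x) = q' x"
    "\<forall>t\<in>{0..1}. h(t,0) = q 0 \<and> h(t,1) = q 1"
    by blast
  let ?H = "\<lambda>y. if y \<in> {y. snd y \<le> 1/2} then p (2 * snd y) else h(fst y, 2 * snd y - 1)"
  have c: "continuous_map (top_of_set SQ) Z ?H"
  proof (rule paste2[where A="{y. snd y \<le> 1/2}" and B="{y. snd y \<ge> 1/2}"])
    show "closed {y::real\<times>real. snd y \<le> 1/2}" by (intro closed_Collect_le continuous_intros)
    show "closed {y::real\<times>real. snd y \<ge> 1/2}" by (intro closed_Collect_le continuous_intros)
    show "continuous_map (top_of_set (SQ \<inter> {y. snd y \<le> 1 / 2})) Z (\<lambda>y. p (2 * snd y))"
      using p unfolding pathin_def by (rule cmc) (auto intro!: continuous_intros)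
    show "continuous_map (top_of_set (SQ \<inter> {y. snd y \<ge> 1 / 2})) Z (\<lambda>y. h (fst y, 2 * snd y - 1))"
      by (rule cmc[OF h(1)]) (auto intro!: continuous_intros)
    show "p (2 * snd y) = h (fst y, 2 * snd y - 1)" if "y \<in> SQ" "y \<in> {y. snd y \<le> 1/2}" "y \<in> {y. snd y \<ge> 1/2}" for y
    proof -
      have a: "2 * snd y = 1" using that by auto
      have "fst y \<in> {0..1}" using that by auto
      then have "h (fst y, 0) = q 0" using h(4) by blast
      then show ?thesis using e by (simp add: a)
    qed
    show "SQ \<subseteq> {y. snd y \<le> 1/2} \<union> {y. snd y \<ge> 1/2}" by auto
  qed
  show ?thesis
  proof (rule hre_intro[OF c])
    fix x :: real
    show "?H (0, x) = (p #\<^sub>p q) x" using h(2) by (simp add: pjoin_def)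
    show "?H (1, x) = (p #\<^sub>p q') x" using h(3) by (simp add: pjoin_def)
  next
    fix t :: real assume t: "t \<in> {0..1}"
    then have "h (t, 1) = q 1" using h(4) by blast
    then show "?H (t, 0) = (p #\<^sub>p q) 0 \<and> ?H (t, 1) = (p #\<^sub>p q) 1" by (simp add: pjoin_def)
  qed
qed

lemma pjoin_0 [simp]: "(p #\<^sub>p q) 0 = p 0" by (simp add: pjoin_def)
lemma pjoin_1 [simp]: "(p #\<^sub>p q) 1 = q 1" by (simp add: pjoin_def)

lemma G_sym:
  assumes H: "homotopic_rel_ends Y (r #\<^sub>p e) r'" and r: "pathin Y r" and e: "pathin Y e" and re: "r 1 = e 0"
  shows "homotopic_rel_ends Y (r' #\<^sub>p (\<lambda>x. e (1 - x))) r"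
proof -
  have ends: "r' 0 = r 0" "r' 1 = e 1" using hre_ends[OF H] by auto
  have re': "pathin Y (\<lambda>x. e (1 - x))" using pathin_rev[OF e] .
  have j: "pathin Y (r #\<^sub>p e)" using pathin_pjoin[OF r e re] .
  have 1: "homotopic_rel_ends Y (r' #\<^sub>p (\<lambda>x. e (1 - x))) ((r #\<^sub>p e) #\<^sub>p (\<lambda>x. e (1 - x)))"
    by (rule hre_join_left[OF hre_sym[OF H] re']) (simp add: ends)
  have 2: "homotopic_rel_ends Y ((r #\<^sub>p e) #\<^sub>p (\<lambda>x. e (1 - x))) (r #\<^sub>p (e #\<^sub>p (\<lambda>x. e (1 - x))))"
    by (rule hre_sym[OF hre_assoc[OF r e re' re]]) simp
  have 3: "homotopic_rel_ends Y (r #\<^sub>p (e #\<^sub>p (\<lambda>x. e (1 - x)))) (r #\<^sub>p (\<lambda>_. e 0))"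
    by (rule hre_join_right[OF hre_rinv[OF e] r]) (simp add: re)
  have 4: "homotopic_rel_ends Y (r #\<^sub>p (\<lambda>_. e 0)) r"
    by (rule hre_runit[OF r]) (simp add: re)
  show ?thesis using hre_trans[OF 1 hre_trans[OF 2 hre_trans[OF 3 4]]] .
qed

lemma G_trans:
  assumes H1: "homotopic_rel_ends Y (r #\<^sub>p e) r'" and H2: "homotopic_rel_ends Y (r' #\<^sub>p e') r''"
    and r: "pathin Y r" and e: "pathin Y e" and e': "pathin Y e'" and re: "r 1 = e 0" and ee: "e 1 = e' 0"
  shows "homotopic_rel_ends Y (r #\<^sub>p (e #\<^sub>p e')) r''"
proof -
  have 1: "homotopic_rel_ends Y (r #\<^sub>p (e #\<^sub>p e')) ((r #\<^sub>p e) #\<^sub>p e')"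
    by (rule hre_assoc[OF r e e' re ee])
  have 2: "homotopic_rel_ends Y ((r #\<^sub>p e) #\<^sub>p e') (r' #\<^sub>p e')"
    by (rule hre_join_left[OF H1 e']) (simp add: ee)
  show ?thesis using hre_trans[OF 1 hre_trans[OF 2 H2]] .
qed

lemma lift_sq:
  fixes f :: "'z \<Rightarrow> 'x"
  assumes fib: "fibration Z X f" and g: "pathin Z g" and h: "continuous_map (top_of_set SQ) X h"
    and h0: "\<And>w. w \<in> {0..1} \<Longrightarrow> h(w,0) = f (g w)"
  shows "\<exists>H. continuous_map (top_of_set SQ) Z H \<and> (\<forall>w\<in>{0..1}. H(w,0) = g w) \<and> (\<forall>y\<in>SQ. f (H y) = h y)"
proof -
  define A where "A = (\<lambda>x::real. {x}) ` {0..1}"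
  define W where "W = pullback_topology A the_elem unitI"
  have tW: "topspace W = A" unfolding W_def A_def topspace_pullback_topology by auto
  have HLP: "HLP_wrt W Z X f" using fib unfolding fibration_def by blast
  have c1: "continuous_map W unitI the_elem"
    using continuous_map_pullback[of unitI unitI id A the_elem] unfolding W_def by simp
  have c2: "continuous_map unitI W (\<lambda>x. {x})"
    unfolding W_def by (rule continuous_map_pullback') (auto simp: A_def o_def)
  have g': "continuous_map W Z (g \<circ> the_elem)"
    using continuous_map_compose[OF c1 g[unfolded pathin_def]] .
  have m: "continuous_map (prod_topology W unitI) (top_of_set SQ) (\<lambda>y. (the_elem (fst y), snd y))"
  proof -
    have "continuous_map (prod_topology W unitI) (prod_topology unitI unitI) (\<lambda>y. (the_elem (fst y), snd y))"
      unfolding continuous_map_pairwise o_def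
      using continuous_map_compose[OF continuous_map_fst c1] continuous_map_snd
      by (auto simp: o_def)
    then show ?thesis by simp
  qed
  have h': "continuous_map (prod_topology W unitI) X (\<lambda>y. h (the_elem (fst y), snd y))"
    using continuous_map_compose[OF m h] by (simp add: o_def)
  have init: "\<forall>w\<in>topspace W. h (the_elem (fst (w, 0::real)), snd (w, 0::real)) = f ((g \<circ> the_elem) w)"
    unfolding tW A_def using h0 by auto
  obtain H' where H': "continuous_map (prod_topology W unitI) Z H'"
    "\<forall>w\<in>topspace W. H' (w, 0) = (g \<circ> the_elem) w"
    "\<forall>y\<in>topspace (prod_topology W unitI). f (H' y) = h (the_elem (fst y), snd y)"
    using HLP[unfolded HLP_wrt_def, rule_format, OF conjI[OF g' conjI[OF h']]] init by auto
  have m2: "continuous_map (top_of_set SQ) (prod_topology W unitI) (\<lambda>y. ({fst y}, snd y))"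
  proof -
    have "continuous_map (prod_topology unitI unitI) (prod_topology W unitI) (\<lambda>y. ({fst y}, snd y))"
    proof -
      have a1: "continuous_map (prod_topology unitI unitI) W (\<lambda>x. {fst x})"
        using continuous_map_compose[OF continuous_map_fst[of unitI unitI] c2] by (simp only: o_def)
      have a2: "continuous_map (prod_topology unitI unitI) unitI snd" by (rule continuous_map_snd)
      show ?thesis unfolding continuous_map_pairwise using a1 a2 by (simp only: o_def fst_conv snd_conv)
    qed
    then show ?thesis by (simp only: prod_topology_subtopology_eu)
  qed
  show ?thesis
  proof (intro exI[of _ "\<lambda>y. H' ({fst y}, snd y)"] conjI ballI)
    show "continuous_map (top_of_set SQ) Z (\<lambda>y. H' ({fst y}, snd y))"
      using continuous_map_compose[OF m2 H'(1)] by (simp add: o_def)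
    show "H' ({fst (w, 0::real)}, snd (w, 0::real)) = g w" if "w \<in> {0..1}" for w
      using H'(2) that by (auto simp: tW A_def)
    show "f (H' ({fst y}, snd y)) = h y" if "y \<in> SQ" for y
    proof -
      have "({fst y}, snd y) \<in> topspace (prod_topology W unitI)" using that by (auto simp: tW A_def)
      then show ?thesis using H'(3) by force
    qed
  qed
qed

lemma quot_bij:
  assumes eA: "equiv A R" and eB: "equiv B S"
    and F: "\<And>a. a \<in> A \<Longrightarrow> F a = S``{\<phi> a}"
    and \<phi>B: "\<And>a. a \<in> A \<Longrightarrow> \<phi> a \<in> B"
    and wd: "\<And>a a'. (a,a') \<in> R \<Longrightarrow> (\<phi> a, \<phi> a') \<in> S"
    and inj: "\<And>a a'. a \<in> A \<Longrightarrow> a' \<in> A \<Longrightarrow> (\<phi> a, \<phi> a') \<in> S \<Longrightarrow> (a,a') \<in> R"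
    and sur: "\<And>b. b \<in> B \<Longrightarrow> \<exists>a\<in>A. (\<phi> a, b) \<in> S"
  shows "bij_betw (\<lambda>C. \<Union>(F ` C)) (A//R) (B//S)"
proof -
  have RA: "R \<subseteq> A \<times> A" using eA by (simp add: equiv_def)
  have cls: "\<Union>(F ` (R``{a})) = S``{\<phi> a}" if a: "a \<in> A" for a
  proof
    show "\<Union>(F ` (R``{a})) \<subseteq> S``{\<phi> a}"
    proof
      fix x assume "x \<in> \<Union>(F ` (R``{a}))"
      then obtain a' where a': "(a,a') \<in> R" "x \<in> F a'" by auto
      have "a' \<in> A" using a'(1) RA by auto
      then have "x \<in> S``{\<phi> a'}" using a'(2) F by auto
      moreover have "S``{\<phi> a'} = S``{\<phi> a}"
        using equiv_class_eq[OF eB wd[OF a'(1)]] by simp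
      ultimately show "x \<in> S``{\<phi> a}" by simp
    qed
    show "S``{\<phi> a} \<subseteq> \<Union>(F ` (R``{a}))"
    proof -
      have "a \<in> R``{a}" using equiv_class_self[OF eA a] .
      then show ?thesis using F[OF a] by auto
    qed
  qed
  show ?thesis
  proof (rule bij_betw_imageI)
    show "inj_on (\<lambda>C. \<Union>(F ` C)) (A//R)"
    proof (rule inj_onI)
      fix C1 C2 assume C1: "C1 \<in> A//R" and C2: "C2 \<in> A//R" and eq: "\<Union>(F ` C1) = \<Union>(F ` C2)"
      from C1 obtain a1 where a1: "C1 = R``{a1}" "a1 \<in> A" by (rule quotientE)
      from C2 obtain a2 where a2: "C2 = R``{a2}" "a2 \<in> A" by (rule quotientE)
      have "S``{\<phi> a1} = S``{\<phi> a2}" using eq cls[OF a1(2)] cls[OF a2(2)] a1(1) a2(1) by simp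
      then have "(\<phi> a1, \<phi> a2) \<in> S" using eq_equiv_class_iff[OF eB \<phi>B[OF a1(2)] \<phi>B[OF a2(2)]] by simp
      then have "(a1, a2) \<in> R" using inj a1(2) a2(2) by blast
      then show "C1 = C2" using equiv_class_eq[OF eA] a1(1) a2(1) by simp
    qed
    show "(\<lambda>C. \<Union>(F ` C)) ` (A//R) = B//S"
    proof
      show "(\<lambda>C. \<Union>(F ` C)) ` (A//R) \<subseteq> B//S"
      proof
        fix y assume "y \<in> (\<lambda>C. \<Union>(F ` C)) ` (A//R)"
        then obtain C where C: "C \<in> A//R" "y = \<Union>(F ` C)" by auto
        from C(1) obtain a where a: "C = R``{a}" "a \<in> A" by (rule quotientE)
        have "y = S``{\<phi> a}" using C(2) a cls by simp
        then show "y \<in> B//S" using quotientI[OF \<phi>B[OF a(2)]] by simp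
      qed
      show "B//S \<subseteq> (\<lambda>C. \<Union>(F ` C)) ` (A//R)"
      proof
        fix y assume "y \<in> B//S"
        then obtain b where b: "y = S``{b}" "b \<in> B" by (rule quotientE)
        obtain a where a: "a \<in> A" "(\<phi> a, b) \<in> S" using sur[OF b(2)] by blast
        have "y = S``{\<phi> a}" using equiv_class_eq[OF eB a(2)] b(1) by simp
        also have "\<dots> = \<Union>(F ` (R``{a}))" using cls[OF a(1)] by simp
        finally show "y \<in> (\<lambda>C. \<Union>(F ` C)) ` (A//R)" using quotientI[OF a(1), of R] by blast
      qed
    qed
  qed
qed

lemma path_lift:
  assumes fib: "fibration Z X f" and \<gamma>: "pathin X \<gamma>" and z: "z \<in> topspace Z" and fz: "f z = \<gamma> 0"
  shows "\<exists>\<beta>. pathin Z \<beta> \<and> \<beta> 0 = z \<and> (\<forall>t\<in>{0..1}. f (\<beta> t) = \<gamma> t)"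
proof -
  have g: "pathin Z (\<lambda>_. z)" using z by simp
  have h: "continuous_map (top_of_set SQ) X (\<lambda>y. \<gamma> (snd y))"
    using \<gamma> unfolding pathin_def by (rule cmc) (auto intro!: continuous_intros)
  obtain K where K: "continuous_map (top_of_set SQ) Z K" "\<forall>w\<in>{0..1}. K(w,0) = z" "\<forall>y\<in>SQ. f (K y) = \<gamma> (snd y)"
    using lift_sq[OF fib g h] fz by auto
  show ?thesis
  proof (intro exI[of _ "\<lambda>t. K(0,t)"] conjI ballI)
    show "pathin Z (\<lambda>t. K (0, t))" unfolding pathin_def
      by (rule cmc[OF K(1)]) (auto intro!: continuous_intros)
    show "K (0, 0) = z" using K(2) by simp
    show "f (K (0, t)) = \<gamma> t" if "t \<in> {0..1}" for t using K(3) that by auto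
  qed
qed

lemma cont_a2:
  "continuous_on {0..1::real} (\<lambda>x. if x \<le> 1/2 then (if 2*x \<le> 1/2 then (0::real, 2*(2*x)) else (2*(2*x) - 1, 1))
                                  else (1, 1 - (2*x - 1)))"
proof (rule continuous_on_cases_le[where h="\<lambda>x. x"])
  show "continuous_on {x \<in> {0..1::real}. x \<le> 1/2} (\<lambda>x. if 2*x \<le> 1/2 then (0::real, 2*(2*x)) else (2*(2*x) - 1, 1))"
    by (rule continuous_on_cases_le[where h="\<lambda>x. 2*x"]) (auto intro!: continuous_intros)
qed (auto intro!: continuous_intros)

lemma fib_lift:
  assumes fib: "fibration Z X f" and g: "pathin Z g" and g0: "f (g 0) = star" and g1: "f (g 1) = star"
    and H: "homotopic_rel_ends X (f \<circ> g) (\<lambda>_. star)"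
  shows "\<exists>\<eta>. pathin (subtopology Z {z. f z = star}) \<eta> \<and> \<eta> 0 = g 0 \<and> \<eta> 1 = g 1 \<and> homotopic_rel_ends Z g \<eta>"
proof -
  from hre_ex[OF H] obtain Hc where Hc: "continuous_map (top_of_set SQ) X Hc"
    "\<forall>x. Hc(0,x) = (f \<circ> g) x" "\<forall>x. Hc(1,x) = star"
    "\<forall>t\<in>{0..1}. Hc(t,0) = (f \<circ> g) 0 \<and> Hc(t,1) = (f \<circ> g) 1"
    by blast
  have hc: "continuous_map (top_of_set SQ) X (\<lambda>y. Hc(snd y, fst y))"
    by (rule cmc[OF Hc(1)]) (auto intro!: continuous_intros)
  obtain K where K: "continuous_map (top_of_set SQ) Z K" "\<forall>w\<in>{0..1}. K(w,0) = g w"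
    "\<forall>y\<in>SQ. f (K y) = Hc(snd y, fst y)"
    using lift_sq[OF fib g hc] Hc(2) by auto
  let ?F = "{z. f z = star}"
  have fa: "f (K (0,t)) = star" if "t \<in> {0..1}" for t using K(3) Hc(4) that g0 by auto
  have fc: "f (K (s,1)) = star" if "s \<in> {0..1}" for s using K(3) Hc(3) that by auto
  have fe: "f (K (1,t)) = star" if "t \<in> {0..1}" for t using K(3) Hc(4) that g1 by auto
  have pa: "pathin Z (\<lambda>t. K(0,t))" unfolding pathin_def by (rule cmc[OF K(1)]) (auto intro!: continuous_intros)
  have pc: "pathin Z (\<lambda>s. K(s,1))" unfolding pathin_def by (rule cmc[OF K(1)]) (auto intro!: continuous_intros)
  have pe: "pathin Z (\<lambda>t. K(1,1-t))" unfolding pathin_def by (rule cmc[OF K(1)]) (auto intro!: continuous_intros)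
  have pa': "pathin (subtopology Z ?F) (\<lambda>t. K(0,t))" using pa fa by (simp add: pathin_subtopology)
  have pc': "pathin (subtopology Z ?F) (\<lambda>s. K(s,1))" using pc fc by (simp add: pathin_subtopology)
  have pe': "pathin (subtopology Z ?F) (\<lambda>t. K(1,1-t))" using pe fe by (simp add: pathin_subtopology)
  define \<eta> where "\<eta> = ((\<lambda>t. K(0,t)) #\<^sub>p (\<lambda>s. K(s,1))) #\<^sub>p (\<lambda>t. K(1,1-t))"
  have p\<eta>: "pathin (subtopology Z ?F) \<eta>" unfolding \<eta>_def
    by (intro pathin_pjoin pa' pc' pe') (auto simp: pjoin_def)
  have e0: "\<eta> 0 = g 0" using K(2) by (simp add: \<eta>_def pjoin_def)
  have e1: "\<eta> 1 = g 1" using K(2) by (simp add: \<eta>_def pjoin_def)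
  have "homotopic_rel_ends Z g \<eta>"
  proof (rule hre_convex[where S=SQ and Q=K and a="\<lambda>x. (x,0)"
        and b="\<lambda>x. if x \<le> 1/2 then (if 2*x \<le> 1/2 then (0::real, 2*(2*x)) else (2*(2*x) - 1, 1))
                                  else (1, 1 - (2*x - 1))"])
    show "convex SQ" by (simp add: convex_Times)
    show "continuous_on {0..1} (\<lambda>x. if x \<le> 1/2 then (if 2*x \<le> 1/2 then (0::real, 2*(2*x)) else (2*(2*x) - 1, 1))
                                  else (1, 1 - (2*x - 1)))" by (rule cont_a2)
    show "(\<lambda>x. if x \<le> 1/2 then (if 2*x \<le> 1/2 then (0::real, 2*(2*x)) else (2*(2*x) - 1, 1))
                                  else (1, 1 - (2*x - 1))) ` {0..1} \<subseteq> SQ" by auto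
    show "\<eta> x = K (if x \<le> 1/2 then (if 2*x \<le> 1/2 then (0::real, 2*(2*x)) else (2*(2*x) - 1, 1))
                                  else (1, 1 - (2*x - 1)))" if "x \<in> {0..1}" for x
      by (simp add: \<eta>_def pjoin_def)
  qed (use K in \<open>auto intro!: continuous_intros\<close>)
  then show ?thesis using p\<eta> e0 e1 by blast
qed

lemma pathin_fib: "pathin (subtopology Z {z. f z = star}) \<epsilon> \<Longrightarrow> pathin Z \<epsilon> \<and> (\<forall>x\<in>{0..1}. f (\<epsilon> x) = star)"
  by (simp add: pathin_subtopology)

lemma equiv_FR: "equiv (fib_paths Z f dag star) (fib_rel Z f dag star)"
proof (rule equivI)
  show "fib_rel Z f dag star \<subseteq> fib_paths Z f dag star \<times> fib_paths Z f dag star" unfolding fib_rel_def by auto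
  show "refl_on (fib_paths Z f dag star) (fib_rel Z f dag star)"
  proof (unfold refl_on_def, intro ballI)
    fix \<beta> assume b: "\<beta> \<in> fib_paths Z f dag star"
    then have p: "pathin Z \<beta>" and f1: "f (\<beta> 1) = star" unfolding fib_paths_def by auto
    have "pathin (subtopology Z {z. f z = star}) (\<lambda>_. \<beta> 1)"
      using path_finish_in_topspace[OF p] f1 by (simp add: pathin_subtopology)
    moreover have "homotopic_rel_ends Z (\<beta> #\<^sub>p (\<lambda>_. \<beta> 1)) \<beta>" by (rule hre_runit[OF p]) simp
    ultimately have "\<exists>\<epsilon>. pathin (subtopology Z {z. f z = star}) \<epsilon> \<and> \<epsilon> 0 = \<beta> 1 \<and> \<epsilon> 1 = \<beta> 1 \<and>
             homotopic_rel_ends Z (\<beta> #\<^sub>p \<epsilon>) \<beta>" by (intro exI[of _ "\<lambda>_. \<beta> 1"]) simp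
    then show "(\<beta>, \<beta>) \<in> fib_rel Z f dag star" using b unfolding fib_rel_def by simp
  qed
  show "sym (fib_rel Z f dag star)"
  proof (unfold sym_def, intro allI impI)
    fix \<beta> \<beta>' assume "(\<beta>, \<beta>') \<in> fib_rel Z f dag star"
    then obtain \<epsilon> where b: "\<beta> \<in> fib_paths Z f dag star" "\<beta>' \<in> fib_paths Z f dag star"
      and e: "pathin (subtopology Z {z. f z = star}) \<epsilon>" "\<epsilon> 0 = \<beta> 1" "\<epsilon> 1 = \<beta>' 1"
      and H: "homotopic_rel_ends Z (\<beta> #\<^sub>p \<epsilon>) \<beta>'"
      unfolding fib_rel_def by auto
    have p: "pathin Z \<beta>" using b unfolding fib_paths_def by auto
    have pe: "pathin Z \<epsilon>" using pathin_fib[OF e(1)] by simp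
    have "homotopic_rel_ends Z (\<beta>' #\<^sub>p (\<lambda>x. \<epsilon> (1 - x))) \<beta>"
      by (rule G_sym[OF H p pe]) (simp add: e)
    moreover have "pathin (subtopology Z {z. f z = star}) (\<lambda>x. \<epsilon> (1 - x))" using pathin_rev[OF e(1)] .
    ultimately have "\<exists>\<epsilon>. pathin (subtopology Z {z. f z = star}) \<epsilon> \<and> \<epsilon> 0 = \<beta>' 1 \<and> \<epsilon> 1 = \<beta> 1 \<and>
             homotopic_rel_ends Z (\<beta>' #\<^sub>p \<epsilon>) \<beta>" using e by (intro exI[of _ "\<lambda>x. \<epsilon> (1 - x)"]) simp
    then show "(\<beta>', \<beta>) \<in> fib_rel Z f dag star" using b unfolding fib_rel_def by simp
  qed
  show "trans (fib_rel Z f dag star)"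
  proof (unfold trans_def, intro allI impI)
    fix \<beta> \<beta>' \<beta>'' assume "(\<beta>, \<beta>') \<in> fib_rel Z f dag star" "(\<beta>', \<beta>'') \<in> fib_rel Z f dag star"
    then obtain \<epsilon> \<epsilon>' where b: "\<beta> \<in> fib_paths Z f dag star" "\<beta>'' \<in> fib_paths Z f dag star"
      and e: "pathin (subtopology Z {z. f z = star}) \<epsilon>" "\<epsilon> 0 = \<beta> 1" "\<epsilon> 1 = \<beta>' 1"
      and H: "homotopic_rel_ends Z (\<beta> #\<^sub>p \<epsilon>) \<beta>'"
      and e': "pathin (subtopology Z {z. f z = star}) \<epsilon>'" "\<epsilon>' 0 = \<beta>' 1" "\<epsilon>' 1 = \<beta>'' 1"
      and H': "homotopic_rel_ends Z (\<beta>' #\<^sub>p \<epsilon>') \<beta>''"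
      unfolding fib_rel_def by auto
    have p: "pathin Z \<beta>" using b unfolding fib_paths_def by auto
    have pe: "pathin Z \<epsilon>" using pathin_fib[OF e(1)] by simp
    have pe': "pathin Z \<epsilon>'" using pathin_fib[OF e'(1)] by simp
    have "homotopic_rel_ends Z (\<beta> #\<^sub>p (\<epsilon> #\<^sub>p \<epsilon>')) \<beta>''"
      by (rule G_trans[OF H H' p pe pe']) (simp_all add: e e')
    moreover have "pathin (subtopology Z {z. f z = star}) (\<epsilon> #\<^sub>p \<epsilon>')"
      by (rule pathin_pjoin[OF e(1) e'(1)]) (simp add: e e')
    ultimately have "\<exists>\<epsilon>. pathin (subtopology Z {z. f z = star}) \<epsilon> \<and> \<epsilon> 0 = \<beta> 1 \<and> \<epsilon> 1 = \<beta>'' 1 \<and>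
             homotopic_rel_ends Z (\<beta> #\<^sub>p \<epsilon>) \<beta>''" using e e' by (intro exI[of _ "\<epsilon> #\<^sub>p \<epsilon>'"]) simp
    then show "(\<beta>, \<beta>'') \<in> fib_rel Z f dag star" using b unfolding fib_rel_def by simp
  qed
qed

lemma equiv_HR: "equiv (Bpaths X f dag star) (path_htp_rel X (Bpaths X f dag star))"
proof (rule equivI)
  show "path_htp_rel X (Bpaths X f dag star) \<subseteq> Bpaths X f dag star \<times> Bpaths X f dag star"
    unfolding path_htp_rel_def by auto
  show "refl_on (Bpaths X f dag star) (path_htp_rel X (Bpaths X f dag star))"
    unfolding refl_on_def path_htp_rel_def Bpaths_def by (auto intro: hre_refl)
  show "sym (path_htp_rel X (Bpaths X f dag star))"
    unfolding sym_def path_htp_rel_def by (auto intro: hre_sym)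
  show "trans (path_htp_rel X (Bpaths X f dag star))"
    unfolding trans_def path_htp_rel_def by (auto intro: hre_trans)
qed

lemma part1:
  fixes Z :: "'z topology" and X :: "'x topology" and f :: "'z \<Rightarrow> 'x"
  assumes fib: "fibration Z X f" and star: "star \<in> topspace X" and dag: "dag \<in> topspace Z"
  shows "equiv (fib_paths Z f dag star) (fib_rel Z f dag star) \<and>
       bij_betw
         (\<lambda>C. \<Union>\<beta>\<in>C. path_htp_rel X (Bpaths X f dag star) `` {f \<circ> \<beta>})
         (fib_paths Z f dag star // fib_rel Z f dag star)
         (biset X f dag star)"
proof
  have cf: "continuous_map Z X f" using fib unfolding fibration_def by blast
  show "equiv (fib_paths Z f dag star) (fib_rel Z f dag star)" by (rule equiv_FR)
  have inB: "f \<circ> \<beta> \<in> Bpaths X f dag star" if "\<beta> \<in> fib_paths Z f dag star" for \<beta>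
    using that pathin_compose[OF _ cf] unfolding fib_paths_def Bpaths_def by auto
  show "bij_betw (\<lambda>C. \<Union>\<beta>\<in>C. path_htp_rel X (Bpaths X f dag star) `` {f \<circ> \<beta>})
         (fib_paths Z f dag star // fib_rel Z f dag star) (biset X f dag star)"
    unfolding biset_def
  proof (rule quot_bij[OF equiv_FR equiv_HR, where \<phi>="\<lambda>\<beta>. f \<circ> \<beta>"])
    show "f \<circ> \<beta> \<in> Bpaths X f dag star" if "\<beta> \<in> fib_paths Z f dag star" for \<beta> using inB that .
  next
    fix \<beta> \<beta>' assume "(\<beta>, \<beta>') \<in> fib_rel Z f dag star"
    then obtain \<epsilon> where b: "\<beta> \<in> fib_paths Z f dag star" "\<beta>' \<in> fib_paths Z f dag star"
      and e: "pathin (subtopology Z {z. f z = star}) \<epsilon>" "\<epsilon> 0 = \<beta> 1" "\<epsilon> 1 = \<beta>' 1"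
      and H: "homotopic_rel_ends Z (\<beta> #\<^sub>p \<epsilon>) \<beta>'"
      unfolding fib_rel_def by auto
    have p: "pathin Z \<beta>" and f1: "f (\<beta> 1) = star" using b unfolding fib_paths_def by auto
    have h1: "homotopic_rel_ends X ((f \<circ> \<beta>) #\<^sub>p (f \<circ> \<epsilon>)) (f \<circ> \<beta>)"
      by (rule hre_runit[OF pathin_compose[OF p cf]]) (use pathin_fib[OF e(1)] f1 in simp)
    have eq: "f \<circ> (\<beta> #\<^sub>p \<epsilon>) = (f \<circ> \<beta>) #\<^sub>p (f \<circ> \<epsilon>)" by (auto simp: fun_eq_iff pjoin_def)
    have h2: "homotopic_rel_ends X ((f \<circ> \<beta>) #\<^sub>p (f \<circ> \<epsilon>)) (f \<circ> \<beta>')"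
      using hre_compose[OF H cf] unfolding eq .
    show "(f \<circ> \<beta>, f \<circ> \<beta>') \<in> path_htp_rel X (Bpaths X f dag star)"
      unfolding path_htp_rel_def using inB b hre_trans[OF hre_sym[OF h1] h2] by auto
  next
    fix \<beta> \<beta>' assume b: "\<beta> \<in> fib_paths Z f dag star" "\<beta>' \<in> fib_paths Z f dag star"
      and "(f \<circ> \<beta>, f \<circ> \<beta>') \<in> path_htp_rel X (Bpaths X f dag star)"
    then have H: "homotopic_rel_ends X (f \<circ> \<beta>) (f \<circ> \<beta>')" unfolding path_htp_rel_def by auto
    have p: "pathin Z \<beta>" and p0: "\<beta> 0 = dag" and f1: "f (\<beta> 1) = star" using b unfolding fib_paths_def by auto
    have p': "pathin Z \<beta>'" and p0': "\<beta>' 0 = dag" and f1': "f (\<beta>' 1) = star" using b unfolding fib_paths_def by auto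
    define g where "g = (\<lambda>x. \<beta> (1 - x)) #\<^sub>p \<beta>'"
    have rp: "pathin Z (\<lambda>x. \<beta> (1 - x))" using pathin_rev[OF p] .
    have pg: "pathin Z g" unfolding g_def by (rule pathin_pjoin[OF rp p']) (simp add: p0 p0')
    have g0: "f (g 0) = star" and g1: "f (g 1) = star" using f1 f1' by (simp_all add: g_def)
    have fp: "pathin X (f \<circ> \<beta>)" using pathin_compose[OF p cf] .
    have frp: "pathin X (\<lambda>x. (f \<circ> \<beta>) (1 - x))" using pathin_rev[OF fp] .
    have eqg: "f \<circ> g = (\<lambda>x. (f \<circ> \<beta>) (1 - x)) #\<^sub>p (f \<circ> \<beta>')" by (auto simp: fun_eq_iff pjoin_def g_def)
    have c1: "homotopic_rel_ends X (f \<circ> g) ((\<lambda>x. (f \<circ> \<beta>) (1 - x)) #\<^sub>p (f \<circ> \<beta>))"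
      unfolding eqg by (rule hre_join_right[OF hre_sym[OF H] frp]) (simp add: p0 p0')
    have c2: "homotopic_rel_ends X ((\<lambda>x. (f \<circ> \<beta>) (1 - x)) #\<^sub>p (f \<circ> \<beta>)) (\<lambda>_. star)"
      using hre_linv[OF fp] f1 by simp
    obtain \<eta> where \<eta>: "pathin (subtopology Z {z. f z = star}) \<eta>" "\<eta> 0 = g 0" "\<eta> 1 = g 1"
      and H\<eta>: "homotopic_rel_ends Z g \<eta>"
      using fib_lift[OF fib pg g0 g1 hre_trans[OF c1 c2]] by blast
    have e01: "\<eta> 0 = \<beta> 1" "\<eta> 1 = \<beta>' 1" using \<eta> by (simp_all add: g_def)
    have d1: "homotopic_rel_ends Z (\<beta> #\<^sub>p \<eta>) (\<beta> #\<^sub>p g)"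
      by (rule hre_join_right[OF hre_sym[OF H\<eta>] p]) (simp add: e01)
    have d2: "homotopic_rel_ends Z (\<beta> #\<^sub>p g) ((\<beta> #\<^sub>p (\<lambda>x. \<beta> (1 - x))) #\<^sub>p \<beta>')"
      unfolding g_def by (rule hre_assoc[OF p rp p']) (simp_all add: p0 p0')
    have d3: "homotopic_rel_ends Z ((\<beta> #\<^sub>p (\<lambda>x. \<beta> (1 - x))) #\<^sub>p \<beta>') ((\<lambda>_. \<beta> 0) #\<^sub>p \<beta>')"
      by (rule hre_join_left[OF hre_rinv[OF p] p']) (simp add: p0 p0')
    have d4: "homotopic_rel_ends Z ((\<lambda>_. \<beta> 0) #\<^sub>p \<beta>') \<beta>'"
      by (rule hre_lunit[OF p']) (simp add: p0 p0')
    have "\<exists>\<epsilon>. pathin (subtopology Z {z. f z = star}) \<epsilon> \<and> \<epsilon> 0 = \<beta> 1 \<and> \<epsilon> 1 = \<beta>' 1 \<and>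
             homotopic_rel_ends Z (\<beta> #\<^sub>p \<epsilon>) \<beta>'"
      using \<eta>(1) e01 hre_trans[OF d1 hre_trans[OF d2 hre_trans[OF d3 d4]]] by blast
    then show "(\<beta>, \<beta>') \<in> fib_rel Z f dag star" using b unfolding fib_rel_def by simp
  next
    fix \<gamma> assume g: "\<gamma> \<in> Bpaths X f dag star"
    then have pg: "pathin X \<gamma>" and g0: "\<gamma> 0 = f dag" and g1: "\<gamma> 1 = star" unfolding Bpaths_def by auto
    obtain \<beta> where \<beta>: "pathin Z \<beta>" "\<beta> 0 = dag" "\<forall>t\<in>{0..1}. f (\<beta> t) = \<gamma> t"
      using path_lift[OF fib pg dag g0[symmetric]] by blast
    have b: "\<beta> \<in> fib_paths Z f dag star" using \<beta> g1 unfolding fib_paths_def by auto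
    have "homotopic_rel_ends X (f \<circ> \<beta>) \<gamma>"
      by (rule hre_eq[OF hre_refl[OF pg]]) (use \<beta>(3) in auto)
    then have "(f \<circ> \<beta>, \<gamma>) \<in> path_htp_rel X (Bpaths X f dag star)"
      unfolding path_htp_rel_def using inB[OF b] g by auto
    then show "\<exists>a\<in>fib_paths Z f dag star. (f \<circ> a, \<gamma>) \<in> path_htp_rel X (Bpaths X f dag star)" using b by blast
  qed simp
qed

lemma vstack:
  assumes D1: "continuous_map (top_of_set SQ) W D1" and D2: "continuous_map (top_of_set SQ) W D2"
    and m: "\<And>s. s \<in> {0..1} \<Longrightarrow> D1(s,1) = D2(s,0)"
  shows "continuous_map (top_of_set SQ) W (\<lambda>y. if snd y \<le> 1/2 then D1(fst y, 2 * snd y) else D2(fst y, 2 * snd y - 1))"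
proof -
  have "continuous_map (top_of_set SQ) W (\<lambda>y. if y \<in> {y. snd y \<le> 1/2} then D1(fst y, 2 * snd y) else D2(fst y, 2 * snd y - 1))"
  proof (rule paste2[where A="{y. snd y \<le> 1/2}" and B="{y. snd y \<ge> 1/2}"])
    show "closed {y::real\<times>real. snd y \<le> 1/2}" by (intro closed_Collect_le continuous_intros)
    show "closed {y::real\<times>real. snd y \<ge> 1/2}" by (intro closed_Collect_le continuous_intros)
    show "continuous_map (top_of_set (SQ \<inter> {y. snd y \<le> 1 / 2})) W (\<lambda>y. D1 (fst y, 2 * snd y))"
      by (rule cmc[OF D1]) (auto intro!: continuous_intros)
    show "continuous_map (top_of_set (SQ \<inter> {y. snd y \<ge> 1 / 2})) W (\<lambda>y. D2 (fst y, 2 * snd y - 1))"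
      by (rule cmc[OF D2]) (auto intro!: continuous_intros)
    show "D1 (fst y, 2 * snd y) = D2 (fst y, 2 * snd y - 1)" if "y \<in> SQ" "y \<in> {y. snd y \<le> 1/2}" "y \<in> {y. snd y \<ge> 1/2}" for y
    proof -
      have a: "2 * snd y = 1" using that by auto
      have "fst y \<in> {0..1}" using that by auto
      then show ?thesis using m by (simp add: a)
    qed
    show "SQ \<subseteq> {y. snd y \<le> 1/2} \<union> {y. snd y \<ge> 1/2}" by auto
  qed
  then show ?thesis by simp
qed

lemma TR_iff: "(\<delta>, p, \<gamma>) \<in> triples Y Z X f i dag star \<longleftrightarrow>
   p \<in> topspace Z \<and> pathin Y \<delta> \<and> \<delta> 0 = dag \<and> \<delta> 1 = i p \<and> pathin X \<gamma> \<and> \<gamma> 0 = f p \<and> \<gamma> 1 = star"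
  by (simp add: triples_def)

lemma T_iff: "((\<delta>, p, \<gamma>), (\<delta>', p', \<gamma>')) \<in> triple_rel Y Z X f i dag star \<longleftrightarrow>
   (\<delta>, p, \<gamma>) \<in> triples Y Z X f i dag star \<and> (\<delta>', p', \<gamma>') \<in> triples Y Z X f i dag star \<and>
   (\<exists>D P G. continuous_map (top_of_set SQ) Y D \<and> pathin Z P \<and> continuous_map (top_of_set SQ) X G \<and>
                 P 0 = p \<and> P 1 = p' \<and>
                 (\<forall>s\<in>{0..1}. D (s, 0) = \<delta> s \<and> D (s, 1) = \<delta>' s \<and>
                              G (s, 0) = \<gamma> s \<and> G (s, 1) = \<gamma>' s) \<and>
                 (\<forall>t\<in>{0..1}. D (0, t) = dag \<and> D (1, t) = i (P t) \<and>
                              G (0, t) = f (P t) \<and> G (1, t) = star))"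
  by (simp add: triple_rel_def)

lemma T_refl:
  assumes "(\<delta>, p, \<gamma>) \<in> triples Y Z X f i dag star"
  shows "((\<delta>, p, \<gamma>), (\<delta>, p, \<gamma>)) \<in> triple_rel Y Z X f i dag star"
proof -
  have a: "p \<in> topspace Z" "pathin Y \<delta>" "\<delta> 0 = dag" "\<delta> 1 = i p" "pathin X \<gamma>" "\<gamma> 0 = f p" "\<gamma> 1 = star"
    using assms by (auto simp: TR_iff)
  have cD: "continuous_map (top_of_set SQ) Y (\<lambda>y. \<delta> (fst y))"
    using a(2) unfolding pathin_def by (rule cmc) (auto intro!: continuous_intros)
  have cG: "continuous_map (top_of_set SQ) X (\<lambda>y. \<gamma> (fst y))"
    using a(5) unfolding pathin_def by (rule cmc) (auto intro!: continuous_intros)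
  show ?thesis unfolding T_iff
    using assms a cD cG by (intro conjI exI[of _ "\<lambda>y. \<delta> (fst y)"] exI[of _ "\<lambda>_. p"] exI[of _ "\<lambda>y. \<gamma> (fst y)"]) auto
qed

lemma T_sym:
  assumes "((\<delta>, p, \<gamma>), (\<delta>', p', \<gamma>')) \<in> triple_rel Y Z X f i dag star"
  shows "((\<delta>', p', \<gamma>'), (\<delta>, p, \<gamma>)) \<in> triple_rel Y Z X f i dag star"
proof -
  from assms obtain D P G where tr: "(\<delta>, p, \<gamma>) \<in> triples Y Z X f i dag star" "(\<delta>', p', \<gamma>') \<in> triples Y Z X f i dag star"
    and c: "continuous_map (top_of_set SQ) Y D" "pathin Z P" "continuous_map (top_of_set SQ) X G"
    and e: "P 0 = p" "P 1 = p'"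
    and s: "\<forall>s\<in>{0..1}. D (s, 0) = \<delta> s \<and> D (s, 1) = \<delta>' s \<and> G (s, 0) = \<gamma> s \<and> G (s, 1) = \<gamma>' s"
    and t: "\<forall>t\<in>{0..1}. D (0, t) = dag \<and> D (1, t) = i (P t) \<and> G (0, t) = f (P t) \<and> G (1, t) = star"
    unfolding T_iff by blast
  have cD: "continuous_map (top_of_set SQ) Y (\<lambda>y. D (fst y, 1 - snd y))"
    by (rule cmc[OF c(1)]) (auto intro!: continuous_intros)
  have cG: "continuous_map (top_of_set SQ) X (\<lambda>y. G (fst y, 1 - snd y))"
    by (rule cmc[OF c(3)]) (auto intro!: continuous_intros)
  have cP: "pathin Z (\<lambda>t. P (1 - t))" using pathin_rev[OF c(2)] .
  have t': "\<forall>t\<in>{0..1}. D (0, 1 - t) = dag \<and> D (1, 1 - t) = i (P (1 - t)) \<and> G (0, 1 - t) = f (P (1 - t)) \<and> G (1, 1 - t) = star"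
    using t by auto
  show ?thesis unfolding T_iff
    using tr cD cG cP e s t' by (intro conjI exI[of _ "\<lambda>y. D (fst y, 1 - snd y)"] exI[of _ "\<lambda>t. P (1 - t)"]
        exI[of _ "\<lambda>y. G (fst y, 1 - snd y)"]) auto
qed

lemma T_trans:
  assumes "((\<delta>, p, \<gamma>), (\<delta>', p', \<gamma>')) \<in> triple_rel Y Z X f i dag star"
    and "((\<delta>', p', \<gamma>'), (\<delta>'', p'', \<gamma>'')) \<in> triple_rel Y Z X f i dag star"
  shows "((\<delta>, p, \<gamma>), (\<delta>'', p'', \<gamma>'')) \<in> triple_rel Y Z X f i dag star"
proof -
  from assms(1) obtain D1 P1 G1 where tr: "(\<delta>, p, \<gamma>) \<in> triples Y Z X f i dag star"
    and c1: "continuous_map (top_of_set SQ) Y D1" "pathin Z P1" "continuous_map (top_of_set SQ) X G1"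
    and e1: "P1 0 = p" "P1 1 = p'"
    and s1: "\<forall>s\<in>{0..1}. D1 (s, 0) = \<delta> s \<and> D1 (s, 1) = \<delta>' s \<and> G1 (s, 0) = \<gamma> s \<and> G1 (s, 1) = \<gamma>' s"
    and t1: "\<forall>t\<in>{0..1}. D1 (0, t) = dag \<and> D1 (1, t) = i (P1 t) \<and> G1 (0, t) = f (P1 t) \<and> G1 (1, t) = star"
    unfolding T_iff by blast
  from assms(2) obtain D2 P2 G2 where tr2: "(\<delta>'', p'', \<gamma>'') \<in> triples Y Z X f i dag star"
    and c2: "continuous_map (top_of_set SQ) Y D2" "pathin Z P2" "continuous_map (top_of_set SQ) X G2"
    and e2: "P2 0 = p'" "P2 1 = p''"
    and s2: "\<forall>s\<in>{0..1}. D2 (s, 0) = \<delta>' s \<and> D2 (s, 1) = \<delta>'' s \<and> G2 (s, 0) = \<gamma>' s \<and> G2 (s, 1) = \<gamma>'' s"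
    and t2: "\<forall>t\<in>{0..1}. D2 (0, t) = dag \<and> D2 (1, t) = i (P2 t) \<and> G2 (0, t) = f (P2 t) \<and> G2 (1, t) = star"
    unfolding T_iff by blast
  let ?D = "\<lambda>y. if snd y \<le> 1/2 then D1(fst y, 2 * snd y) else D2(fst y, 2 * snd y - 1)"
  let ?G = "\<lambda>y. if snd y \<le> 1/2 then G1(fst y, 2 * snd y) else G2(fst y, 2 * snd y - 1)"
  have cD: "continuous_map (top_of_set SQ) Y ?D" by (rule vstack[OF c1(1) c2(1)]) (use s1 s2 in auto)
  have cG: "continuous_map (top_of_set SQ) X ?G" by (rule vstack[OF c1(3) c2(3)]) (use s1 s2 in auto)
  have cP: "pathin Z (P1 #\<^sub>p P2)" by (rule pathin_pjoin[OF c1(2) c2(2)]) (simp add: e1 e2)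
  have s: "\<forall>s\<in>{0..1}. ?D (s, 0) = \<delta> s \<and> ?D (s, 1) = \<delta>'' s \<and> ?G (s, 0) = \<gamma> s \<and> ?G (s, 1) = \<gamma>'' s"
    using s1 s2 by auto
  have t: "?D (0, t) = dag \<and> ?D (1, t) = i ((P1 #\<^sub>p P2) t) \<and> ?G (0, t) = f ((P1 #\<^sub>p P2) t) \<and> ?G (1, t) = star"
    if t: "t \<in> {0..1}" for t
  proof (cases "t \<le> 1/2")
    case True
    then have "2 * t \<in> {0..1}" using t by auto
    then show ?thesis using True t1 by (simp add: pjoin_def)
  next
    case False
    then have "2 * t - 1 \<in> {0..1}" using t by auto
    then show ?thesis using False t2 by (simp add: pjoin_def)
  qed
  show ?thesis unfolding T_iff
    using tr tr2 cD cG cP e1 e2 s t by (intro conjI exI[of _ ?D] exI[of _ "P1 #\<^sub>p P2"] exI[of _ ?G]) auto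
qed

lemma equiv_T: "equiv (triples Y Z X f i dag star) (triple_rel Y Z X f i dag star)"
proof (rule equivI)
  show "triple_rel Y Z X f i dag star \<subseteq> triples Y Z X f i dag star \<times> triples Y Z X f i dag star"
    unfolding triple_rel_def by auto
  show "refl_on (triples Y Z X f i dag star) (triple_rel Y Z X f i dag star)"
    unfolding refl_on_def using T_refl by (metis prod_cases3)
  show "sym (triple_rel Y Z X f i dag star)"
    unfolding sym_def using T_sym by (metis prod_cases3)
  show "trans (triple_rel Y Z X f i dag star)"
    unfolding trans_def using T_trans by (metis prod_cases3)
qed

lemma arith1:
  fixes s t :: real assumes st: "s \<in> {0..1}" "t \<in> {0..1}"
  shows "s * (1 + t) / 2 \<in> {0..1}" "(1 - t) / 2 + s * (1 + t) / 2 \<in> {0..1}"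
proof -
  have s0: "0 \<le> s" and s1: "s \<le> 1" and t0: "0 \<le> t" and t1: "t \<le> 1" using st by auto
  have a: "0 \<le> s * (1 + t)" using s0 t0 by simp
  have b: "s * (1 + t) \<le> 1 * (1 + t)" using mult_right_mono[of s 1 "1+t"] s1 t0 by simp
  define u where "u = s * (1 + t)"
  have a': "0 \<le> u" and b': "u \<le> 1 + t" using a b unfolding u_def by simp_all
  show "s * (1 + t) / 2 \<in> {0..1}" unfolding u_def[symmetric] using a' b' t1 by simp
  show "(1 - t) / 2 + s * (1 + t) / 2 \<in> {0..1}" unfolding u_def[symmetric] using a' b' t1 t0 by (simp add: field_simps)
qed

lemma T_stepB:
  assumes ci: "continuous_map Z Y i" and cf: "continuous_map Z X f"
    and tr: "(\<delta>, p, \<gamma>) \<in> triples Y Z X f i dag star"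
    and e: "pathin Z \<epsilon>" and e0: "\<epsilon> 0 = p"
  shows "((\<delta>, p, \<gamma>), (\<delta> #\<^sub>p (i \<circ> \<epsilon>), \<epsilon> 1, (\<lambda>x. f (\<epsilon> (1 - x))) #\<^sub>p \<gamma>)) \<in> triple_rel Y Z X f i dag star"
proof -
  have a: "p \<in> topspace Z" "pathin Y \<delta>" "\<delta> 0 = dag" "\<delta> 1 = i p" "pathin X \<gamma>" "\<gamma> 0 = f p" "\<gamma> 1 = star"
    using tr by (auto simp: TR_iff)
  define \<rho> where "\<rho> = \<delta> #\<^sub>p (i \<circ> \<epsilon>)"
  define \<sigma> where "\<sigma> = (\<lambda>x. f (\<epsilon> (1 - x))) #\<^sub>p \<gamma>"
  have p\<rho>: "pathin Y \<rho>" unfolding \<rho>_def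
    by (rule pathin_pjoin[OF a(2) pathin_compose[OF e ci]]) (simp add: a e0)
  have p\<sigma>: "pathin X \<sigma>" unfolding \<sigma>_def
    using pathin_rev[OF pathin_compose[OF e cf]] by (intro pathin_pjoin[OF _ a(5)]) (auto simp: a e0 o_def)
  have tr2: "(\<rho>, \<epsilon> 1, \<sigma>) \<in> triples Y Z X f i dag star"
    unfolding TR_iff using path_finish_in_topspace[OF e] p\<rho> p\<sigma> a
    by (simp add: \<rho>_def \<sigma>_def pjoin_def)
  let ?D = "\<lambda>y. \<rho> (fst y * (1 + snd y) / 2)"
  let ?G = "\<lambda>y. \<sigma> ((1 - snd y) / 2 + fst y * (1 + snd y) / 2)"
  have cD: "continuous_map (top_of_set SQ) Y ?D"
    using p\<rho> unfolding pathin_def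
  proof (rule cmc)
    show "continuous_on SQ (\<lambda>y. fst y * (1 + snd y) / 2)" by (intro continuous_intros) auto
    show "(\<lambda>y. fst y * (1 + snd y) / 2) ` SQ \<subseteq> {0..1}"
      unfolding image_subset_iff by (auto simp del: atLeastAtMost_iff intro!: arith1)
  qed
  have cG: "continuous_map (top_of_set SQ) X ?G"
    using p\<sigma> unfolding pathin_def
  proof (rule cmc)
    show "continuous_on SQ (\<lambda>y. (1 - snd y) / 2 + fst y * (1 + snd y) / 2)" by (intro continuous_intros) auto
    show "(\<lambda>y. (1 - snd y) / 2 + fst y * (1 + snd y) / 2) ` SQ \<subseteq> {0..1}"
      unfolding image_subset_iff by (auto simp del: atLeastAtMost_iff intro!: arith1)
  qed
  have s: "?D (s, 0) = \<delta> s \<and> ?D (s, 1) = \<rho> s \<and> ?G (s, 0) = \<gamma> s \<and> ?G (s, 1) = \<sigma> s" if s: "s \<in> {0..1}" for s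
  proof -
    have d0: "?D (s, 0) = \<delta> s" using s by (simp add: \<rho>_def pjoin_def)
    have d1: "?D (s, 1) = \<rho> s" by simp
    have g0: "?G (s, 0) = \<gamma> s"
    proof (cases "s = 0")
      case True then show ?thesis by (simp add: \<sigma>_def pjoin_def a e0)
    next
      case False
      then have "\<not> 1/2 + s/2 \<le> 1/2" using s by auto
      moreover have "2 * (1/2 + s/2) - 1 = s" by (simp add: field_simps)
      ultimately show ?thesis by (simp add: \<sigma>_def pjoin_def)
    qed
    have g1: "?G (s, 1) = \<sigma> s" by simp
    show ?thesis using d0 d1 g0 g1 by blast
  qed
  have t: "?D (0, t) = dag \<and> ?D (1, t) = i (\<epsilon> t) \<and> ?G (0, t) = f (\<epsilon> t) \<and> ?G (1, t) = star"
    if t: "t \<in> {0..1}" for t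
  proof -
    have d0: "?D (0, t) = dag" by (simp add: \<rho>_def a)
    have d1: "?D (1, t) = i (\<epsilon> t)"
    proof (cases "t = 0")
      case True then show ?thesis by (simp add: \<rho>_def pjoin_def a e0)
    next
      case False
      then have "\<not> (1 + t)/2 \<le> 1/2" using t by auto
      moreover have "2 * ((1 + t)/2) - 1 = t" by (simp add: field_simps)
      ultimately show ?thesis by (simp add: \<rho>_def pjoin_def)
    qed
    have g0: "?G (0, t) = f (\<epsilon> t)"
    proof -
      have "(1 - t)/2 \<le> 1/2" using t by auto
      moreover have "1 - 2 * ((1 - t) / 2) = t" by (simp add: field_simps)
      ultimately show ?thesis by (simp add: \<sigma>_def pjoin_def)
    qed
    have g1: "?G (1, t) = star"
    proof -
      have "(1 - t) / 2 + 1 * (1 + t) / 2 = 1" by (simp add: field_simps)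
      then show ?thesis by (simp add: \<sigma>_def a)
    qed
    show ?thesis using d0 d1 g0 g1 by blast
  qed
  show ?thesis unfolding T_iff \<rho>_def[symmetric] \<sigma>_def[symmetric]
    using tr tr2 cD cG e e0 s t by (intro conjI exI[of _ ?D] exI[of _ \<epsilon>] exI[of _ ?G]) auto
qed

lemma T_stepA:
  assumes tr: "(\<delta>, p, \<gamma>) \<in> triples Y Z X f i dag star" and H: "homotopic_rel_ends Y \<delta> \<delta>'"
  shows "((\<delta>, p, \<gamma>), (\<delta>', p, \<gamma>)) \<in> triple_rel Y Z X f i dag star"
proof -
  have a: "p \<in> topspace Z" "pathin Y \<delta>" "\<delta> 0 = dag" "\<delta> 1 = i p" "pathin X \<gamma>" "\<gamma> 0 = f p" "\<gamma> 1 = star"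
    using tr by (auto simp: TR_iff)
  from hre_ex[OF H] obtain h where h: "continuous_map (top_of_set SQ) Y h"
    "\<forall>x. h(0,x) = \<delta> x" "\<forall>x. h(1,x) = \<delta>' x"
    "\<forall>t\<in>{0..1}. h(t,0) = \<delta> 0 \<and> h(t,1) = \<delta> 1"
    by blast
  have tr2: "(\<delta>', p, \<gamma>) \<in> triples Y Z X f i dag star"
    using tr hre_pathin[OF H] hre_ends[OF H] by (auto simp: TR_iff)
  have cD: "continuous_map (top_of_set SQ) Y (\<lambda>y. h (snd y, fst y))"
    by (rule cmc[OF h(1)]) (auto intro!: continuous_intros)
  have cG: "continuous_map (top_of_set SQ) X (\<lambda>y. \<gamma> (fst y))"
    using a(5) unfolding pathin_def by (rule cmc) (auto intro!: continuous_intros)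
  show ?thesis unfolding T_iff
    using tr tr2 cD cG a h by (intro conjI exI[of _ "\<lambda>y. h (snd y, fst y)"] exI[of _ "\<lambda>_. p"] exI[of _ "\<lambda>y. \<gamma> (fst y)"]) auto
qed

lemma T_stepA':
  assumes tr: "(\<delta>, p, \<gamma>) \<in> triples Y Z X f i dag star" and H: "homotopic_rel_ends X \<gamma> \<gamma>'"
  shows "((\<delta>, p, \<gamma>), (\<delta>, p, \<gamma>')) \<in> triple_rel Y Z X f i dag star"
proof -
  have a: "p \<in> topspace Z" "pathin Y \<delta>" "\<delta> 0 = dag" "\<delta> 1 = i p" "pathin X \<gamma>" "\<gamma> 0 = f p" "\<gamma> 1 = star"
    using tr by (auto simp: TR_iff)
  from hre_ex[OF H] obtain h where h: "continuous_map (top_of_set SQ) X h"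
    "\<forall>x. h(0,x) = \<gamma> x" "\<forall>x. h(1,x) = \<gamma>' x"
    "\<forall>t\<in>{0..1}. h(t,0) = \<gamma> 0 \<and> h(t,1) = \<gamma> 1"
    by blast
  have tr2: "(\<delta>, p, \<gamma>') \<in> triples Y Z X f i dag star"
    using tr hre_pathin[OF H] hre_ends[OF H] by (auto simp: TR_iff)
  have cG: "continuous_map (top_of_set SQ) X (\<lambda>y. h (snd y, fst y))"
    by (rule cmc[OF h(1)]) (auto intro!: continuous_intros)
  have cD: "continuous_map (top_of_set SQ) Y (\<lambda>y. \<delta> (fst y))"
    using a(2) unfolding pathin_def by (rule cmc) (auto intro!: continuous_intros)
  show ?thesis unfolding T_iff
    using tr tr2 cD cG a h by (intro conjI exI[of _ "\<lambda>y. \<delta> (fst y)"] exI[of _ "\<lambda>_. p"] exI[of _ "\<lambda>y. h (snd y, fst y)"]) auto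
qed

lemma RP_iff: "(\<delta>, p) \<in> red_pairs Y Z f i dag star \<longleftrightarrow>
   p \<in> topspace Z \<and> pathin Y \<delta> \<and> \<delta> 0 = dag \<and> \<delta> 1 = i p \<and> f p = star"
  by (simp add: red_pairs_def)

lemma RR_iff: "((\<delta>, p), (\<delta>', p')) \<in> red_rel Y Z f i dag star \<longleftrightarrow>
   (\<delta>, p) \<in> red_pairs Y Z f i dag star \<and> (\<delta>', p') \<in> red_pairs Y Z f i dag star \<and>
   (\<exists>\<epsilon>. pathin (subtopology Z {z. f z = star}) \<epsilon> \<and> \<epsilon> 0 = p \<and> \<epsilon> 1 = p' \<and>
             homotopic_rel_ends Y (\<delta> #\<^sub>p (i \<circ> \<epsilon>)) \<delta>')"
  by (simp add: red_rel_def)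

lemma RR_refl:
  assumes "(\<delta>, p) \<in> red_pairs Y Z f i dag star"
  shows "((\<delta>, p), (\<delta>, p)) \<in> red_rel Y Z f i dag star"
proof -
  have a: "p \<in> topspace Z" "pathin Y \<delta>" "\<delta> 0 = dag" "\<delta> 1 = i p" "f p = star" using assms by (auto simp: RP_iff)
  have "pathin (subtopology Z {z. f z = star}) (\<lambda>_. p)" using a by (simp add: pathin_subtopology)
  moreover have "homotopic_rel_ends Y (\<delta> #\<^sub>p (i \<circ> (\<lambda>_. p))) \<delta>" by (rule hre_runit[OF a(2)]) (simp add: a)
  ultimately show ?thesis unfolding RR_iff using assms by (intro conjI exI[of _ "\<lambda>_. p"]) auto
qed

lemma RR_sym:
  assumes ci: "continuous_map Z Y i" and "((\<delta>, p), (\<delta>', p')) \<in> red_rel Y Z f i dag star"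
  shows "((\<delta>', p'), (\<delta>, p)) \<in> red_rel Y Z f i dag star"
proof -
  from assms(2) obtain \<epsilon> where b: "(\<delta>, p) \<in> red_pairs Y Z f i dag star" "(\<delta>', p') \<in> red_pairs Y Z f i dag star"
    and e: "pathin (subtopology Z {z. f z = star}) \<epsilon>" "\<epsilon> 0 = p" "\<epsilon> 1 = p'"
    and H: "homotopic_rel_ends Y (\<delta> #\<^sub>p (i \<circ> \<epsilon>)) \<delta>'"
    unfolding RR_iff by blast
  have a: "pathin Y \<delta>" "\<delta> 1 = i p" using b by (auto simp: RP_iff)
  have pe: "pathin Y (i \<circ> \<epsilon>)" using pathin_compose[OF conjunct1[OF pathin_fib[OF e(1)]] ci] .
  have "homotopic_rel_ends Y (\<delta>' #\<^sub>p (\<lambda>x. (i \<circ> \<epsilon>) (1 - x))) \<delta>"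
    by (rule G_sym[OF H a(1) pe]) (simp add: a e)
  moreover have "(\<lambda>x. (i \<circ> \<epsilon>) (1 - x)) = i \<circ> (\<lambda>x. \<epsilon> (1 - x))" by (simp add: o_def)
  moreover have "pathin (subtopology Z {z. f z = star}) (\<lambda>x. \<epsilon> (1 - x))" using pathin_rev[OF e(1)] .
  ultimately show ?thesis unfolding RR_iff using b e by (intro conjI exI[of _ "\<lambda>x. \<epsilon> (1 - x)"]) auto
qed

lemma RR_trans:
  assumes ci: "continuous_map Z Y i" and "((\<delta>, p), (\<delta>', p')) \<in> red_rel Y Z f i dag star"
    and "((\<delta>', p'), (\<delta>'', p'')) \<in> red_rel Y Z f i dag star"
  shows "((\<delta>, p), (\<delta>'', p'')) \<in> red_rel Y Z f i dag star"
proof -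
  from assms(2) obtain \<epsilon> where b: "(\<delta>, p) \<in> red_pairs Y Z f i dag star"
    and e: "pathin (subtopology Z {z. f z = star}) \<epsilon>" "\<epsilon> 0 = p" "\<epsilon> 1 = p'"
    and H: "homotopic_rel_ends Y (\<delta> #\<^sub>p (i \<circ> \<epsilon>)) \<delta>'"
    unfolding RR_iff by blast
  from assms(3) obtain \<epsilon>' where b': "(\<delta>'', p'') \<in> red_pairs Y Z f i dag star"
    and e': "pathin (subtopology Z {z. f z = star}) \<epsilon>'" "\<epsilon>' 0 = p'" "\<epsilon>' 1 = p''"
    and H': "homotopic_rel_ends Y (\<delta>' #\<^sub>p (i \<circ> \<epsilon>')) \<delta>''"
    unfolding RR_iff by blast
  have a: "pathin Y \<delta>" "\<delta> 1 = i p" using b by (auto simp: RP_iff)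
  have pe: "pathin Y (i \<circ> \<epsilon>)" using pathin_compose[OF conjunct1[OF pathin_fib[OF e(1)]] ci] .
  have pe': "pathin Y (i \<circ> \<epsilon>')" using pathin_compose[OF conjunct1[OF pathin_fib[OF e'(1)]] ci] .
  have "homotopic_rel_ends Y (\<delta> #\<^sub>p ((i \<circ> \<epsilon>) #\<^sub>p (i \<circ> \<epsilon>'))) \<delta>''"
    by (rule G_trans[OF H H' a(1) pe pe']) (simp_all add: a e e')
  moreover have "(i \<circ> \<epsilon>) #\<^sub>p (i \<circ> \<epsilon>') = i \<circ> (\<epsilon> #\<^sub>p \<epsilon>')" by (auto simp: fun_eq_iff pjoin_def)
  moreover have "pathin (subtopology Z {z. f z = star}) (\<epsilon> #\<^sub>p \<epsilon>')"
    by (rule pathin_pjoin[OF e(1) e'(1)]) (simp add: e e')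
  ultimately show ?thesis unfolding RR_iff using b b' e e' by (intro conjI exI[of _ "\<epsilon> #\<^sub>p \<epsilon>'"]) auto
qed

lemma equiv_RR:
  assumes ci: "continuous_map Z Y i"
  shows "equiv (red_pairs Y Z f i dag star) (red_rel Y Z f i dag star)"
proof (rule equivI)
  show "red_rel Y Z f i dag star \<subseteq> red_pairs Y Z f i dag star \<times> red_pairs Y Z f i dag star"
    unfolding red_rel_def by auto
  show "refl_on (red_pairs Y Z f i dag star) (red_rel Y Z f i dag star)"
    unfolding refl_on_def using RR_refl by (metis prod.exhaust)
  show "sym (red_rel Y Z f i dag star)"
    unfolding sym_def using RR_sym[OF ci] by (metis prod.exhaust)
  show "trans (red_rel Y Z f i dag star)"
    unfolding trans_def using RR_trans[OF ci] by (metis prod.exhaust)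
qed

lemma cont_b1:
  "continuous_on {0..1::real} (\<lambda>x. if x \<le> 1/2 then (2*x, 0::real) else (1, 2*x - 1))"
  by (rule continuous_on_cases_le[where h="\<lambda>x. x"]) (auto intro!: continuous_intros)

lemma cont_b2:
  "continuous_on {0..1::real} (\<lambda>x. if x \<le> 1/2 then (0::real, 2*x) else (2*x - 1, 1))"
  by (rule continuous_on_cases_le[where h="\<lambda>x. x"]) (auto intro!: continuous_intros)

lemma ubox:
  fixes x :: real assumes x: "x \<in> {0..1}"
  defines "u \<equiv> min 1 (min (3*x) (3 - 3*x))" and "v \<equiv> max 0 (min 1 (3*x - 1))"
  shows "u \<in> {0..1}" "v \<in> {0..1}" "v = 0 \<or> v = 1 \<or> u = 1"
  using x unfolding u_def v_def by auto

lemma part2_inj: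
  fixes Z :: "'z topology" and X :: "'x topology" and Y :: "'y topology" and f :: "'z \<Rightarrow> 'x"
  assumes fib: "fibration Z X f" and ci: "continuous_map Z Y i"
    and a: "(\<delta>, p) \<in> red_pairs Y Z f i dag star" and a': "(\<delta>', p') \<in> red_pairs Y Z f i dag star"
    and T: "((\<delta>, p, \<lambda>_. star), (\<delta>', p', \<lambda>_. star)) \<in> triple_rel Y Z X f i dag star"
  shows "((\<delta>, p), (\<delta>', p')) \<in> red_rel Y Z f i dag star"
proof -
  have A: "p \<in> topspace Z" "pathin Y \<delta>" "\<delta> 0 = dag" "\<delta> 1 = i p" "f p = star" using a by (auto simp: RP_iff)
  have A': "p' \<in> topspace Z" "pathin Y \<delta>'" "\<delta>' 0 = dag" "\<delta>' 1 = i p'" "f p' = star" using a' by (auto simp: RP_iff)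
  from T obtain D P G where
        c: "continuous_map (top_of_set SQ) Y D" "pathin Z P" "continuous_map (top_of_set SQ) X G"
    and e: "P 0 = p" "P 1 = p'"
    and s: "\<forall>s\<in>{0..1}. D (s, 0) = \<delta> s \<and> D (s, 1) = \<delta>' s \<and> G (s, 0) = star \<and> G (s, 1) = star"
    and t: "\<forall>t\<in>{0..1}. D (0, t) = dag \<and> D (1, t) = i (P t) \<and> G (0, t) = f (P t) \<and> G (1, t) = star"
    unfolding T_iff by blast
  have HP: "homotopic_rel_ends X (f \<circ> P) (\<lambda>_. star)"
  proof (rule hre_convex[where S=SQ and Q=G and a="\<lambda>x. (0,x)"
        and b="\<lambda>x. (min 1 (min (3*x) (3 - 3*x)), max 0 (min 1 (3*x - 1)))"])
    show "convex SQ" by (simp add: convex_Times)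
    show "continuous_on {0..1} (\<lambda>x::real. (min 1 (min (3*x) (3 - 3*x)), max 0 (min 1 (3*x - 1))))"
      by (intro continuous_intros)
    show "(\<lambda>x::real. (min 1 (min (3*x) (3 - 3*x)), max 0 (min 1 (3*x - 1)))) ` {0..1} \<subseteq> SQ"
      using ubox(1,2) by auto
    show "(\<lambda>_. star) x = G (min 1 (min (3*x) (3 - 3*x)), max 0 (min 1 (3*x - 1)))" if x: "x \<in> {0..1}" for x :: real
    proof -
      define u where "u = min 1 (min (3*x) (3 - 3*x))"
      define v where "v = max 0 (min 1 (3*x - 1))"
      have uv: "u \<in> {0..1}" "v \<in> {0..1}" "v = 0 \<or> v = 1 \<or> u = 1"
        using ubox[OF x] unfolding u_def v_def by auto
      have "G (u, v) = star"
        using uv(3)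
      proof (elim disjE)
        assume "v = 0" then show ?thesis using s uv(1) by auto
      next
        assume "v = 1" then show ?thesis using s uv(1) by auto
      next
        assume "u = 1" then show ?thesis using t uv(2) by auto
      qed
      then show ?thesis unfolding u_def v_def by simp
    qed
  qed (use c t in \<open>auto intro!: continuous_intros\<close>)
  obtain \<eta> where \<eta>: "pathin (subtopology Z {z. f z = star}) \<eta>" "\<eta> 0 = P 0" "\<eta> 1 = P 1"
      and H\<eta>: "homotopic_rel_ends Z P \<eta>"
    using fib_lift[OF fib c(2) _ _ HP] A(5) A'(5) e by auto
  have d1: "homotopic_rel_ends Y (\<delta> #\<^sub>p (i \<circ> P)) ((\<lambda>_. dag) #\<^sub>p \<delta>')"
  proof (rule hre_convex[where S=SQ and Q=D and a="\<lambda>x. if x \<le> 1/2 then (2*x, 0::real) else (1, 2*x - 1)"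
        and b="\<lambda>x. if x \<le> 1/2 then (0::real, 2*x) else (2*x - 1, 1)"])
    show "convex SQ" by (simp add: convex_Times)
    show "continuous_on {0..1} (\<lambda>x. if x \<le> 1/2 then (2*x, 0::real) else (1, 2*x - 1))" by (rule cont_b1)
    show "continuous_on {0..1} (\<lambda>x. if x \<le> 1/2 then (0::real, 2*x) else (2*x - 1, 1))" by (rule cont_b2)
    show "(\<delta> #\<^sub>p (i \<circ> P)) x = D (if x \<le> 1/2 then (2*x, 0::real) else (1, 2*x - 1))" if x: "x \<in> {0..1}" for x :: real
    proof (cases "x \<le> 1/2")
      case True then have "2*x \<in> {0..1}" using x by auto
      then show ?thesis using True s by (simp add: pjoin_def)
    next
      case False then have "2*x - 1 \<in> {0..1}" using x by auto
      then show ?thesis using False t by (simp add: pjoin_def)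
    qed
    show "((\<lambda>_. dag) #\<^sub>p \<delta>') x = D (if x \<le> 1/2 then (0::real, 2*x) else (2*x - 1, 1))" if x: "x \<in> {0..1}" for x :: real
    proof (cases "x \<le> 1/2")
      case True then have "2*x \<in> {0..1}" using x by auto
      then show ?thesis using True t by (simp add: pjoin_def)
    next
      case False then have "2*x - 1 \<in> {0..1}" using x by auto
      then show ?thesis using False s by (simp add: pjoin_def)
    qed
  qed (use c in auto)
  have d2: "homotopic_rel_ends Y ((\<lambda>_. dag) #\<^sub>p \<delta>') \<delta>'" by (rule hre_lunit[OF A'(2)]) (simp add: A')
  have d0: "homotopic_rel_ends Y (\<delta> #\<^sub>p (i \<circ> \<eta>)) (\<delta> #\<^sub>p (i \<circ> P))"
    by (rule hre_join_right[OF hre_compose[OF hre_sym[OF H\<eta>] ci] A(2)]) (simp add: \<eta> e A)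
  have "homotopic_rel_ends Y (\<delta> #\<^sub>p (i \<circ> \<eta>)) \<delta>'" using hre_trans[OF d0 hre_trans[OF d1 d2]] .
  then show ?thesis unfolding RR_iff using a a' \<eta> e by (intro conjI exI[of _ \<eta>]) auto
qed

lemma P2_B:
  assumes "(\<delta>, p) \<in> red_pairs Y Z f i dag star" "star \<in> topspace X"
  shows "(\<delta>, p, \<lambda>_. star) \<in> triples Y Z X f i dag star"
  using assms by (auto simp: RP_iff TR_iff)

lemma P2_wd:
  assumes ci: "continuous_map Z Y i" and cf: "continuous_map Z X f" and star: "star \<in> topspace X"
    and R: "((\<delta>, p), (\<delta>', p')) \<in> red_rel Y Z f i dag star"
  shows "((\<delta>, p, \<lambda>_. star), (\<delta>', p', \<lambda>_. star)) \<in> triple_rel Y Z X f i dag star"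
proof -
  from R obtain \<epsilon> where b: "(\<delta>, p) \<in> red_pairs Y Z f i dag star" "(\<delta>', p') \<in> red_pairs Y Z f i dag star"
    and e: "pathin (subtopology Z {z. f z = star}) \<epsilon>" "\<epsilon> 0 = p" "\<epsilon> 1 = p'"
    and H: "homotopic_rel_ends Y (\<delta> #\<^sub>p (i \<circ> \<epsilon>)) \<delta>'"
    unfolding RR_iff by blast
  have pe: "pathin Z \<epsilon>" and fe: "\<forall>x\<in>{0..1}. f (\<epsilon> x) = star" using pathin_fib[OF e(1)] by auto
  have tr: "(\<delta>, p, \<lambda>_. star) \<in> triples Y Z X f i dag star" using P2_B[OF b(1) star] .
  have s1: "((\<delta>, p, \<lambda>_. star), (\<delta> #\<^sub>p (i \<circ> \<epsilon>), p', (\<lambda>x. f (\<epsilon> (1 - x))) #\<^sub>p (\<lambda>_. star))) \<in> triple_rel Y Z X f i dag star"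
    using T_stepB[OF ci cf tr pe e(2)] e(3) by simp
  have tr1: "(\<delta> #\<^sub>p (i \<circ> \<epsilon>), p', (\<lambda>x. f (\<epsilon> (1 - x))) #\<^sub>p (\<lambda>_. star)) \<in> triples Y Z X f i dag star"
    using s1 unfolding T_iff by blast
  have hs: "homotopic_rel_ends X ((\<lambda>x. f (\<epsilon> (1 - x))) #\<^sub>p (\<lambda>_. star)) (\<lambda>_. star)"
  proof (rule hre_eq[OF hre_refl[of X "\<lambda>_. star"]])
    show "pathin X (\<lambda>_. star)" using star by simp
    show "((\<lambda>x. f (\<epsilon> (1 - x))) #\<^sub>p (\<lambda>_. star)) x = star" if "x \<in> {0..1}" for x :: real
    proof (cases "x \<le> 1/2")
      case True then have "1 - 2*x \<in> {0..1}" using that by auto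
      then show ?thesis using True fe by (simp add: pjoin_def)
    next
      case False then show ?thesis by (simp add: pjoin_def)
    qed
  qed simp
  have s2: "((\<delta> #\<^sub>p (i \<circ> \<epsilon>), p', (\<lambda>x. f (\<epsilon> (1 - x))) #\<^sub>p (\<lambda>_. star)), (\<delta> #\<^sub>p (i \<circ> \<epsilon>), p', \<lambda>_. star)) \<in> triple_rel Y Z X f i dag star"
    by (rule T_stepA'[OF tr1 hs])
  have tr2: "(\<delta> #\<^sub>p (i \<circ> \<epsilon>), p', \<lambda>_. star) \<in> triples Y Z X f i dag star"
    using s2 unfolding T_iff by blast
  have s3: "((\<delta> #\<^sub>p (i \<circ> \<epsilon>), p', \<lambda>_. star), (\<delta>', p', \<lambda>_. star)) \<in> triple_rel Y Z X f i dag star"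
    by (rule T_stepA[OF tr2 H])
  show ?thesis using T_trans[OF s1 T_trans[OF s2 s3]] .
qed

lemma P2_sur:
  assumes fib: "fibration Z X f" and ci: "continuous_map Z Y i"
    and tr: "(\<delta>, p, \<gamma>) \<in> triples Y Z X f i dag star"
  shows "\<exists>\<delta>0 p0. (\<delta>0, p0) \<in> red_pairs Y Z f i dag star \<and>
           ((\<delta>0, p0, \<lambda>_. star), (\<delta>, p, \<gamma>)) \<in> triple_rel Y Z X f i dag star"
proof -
  have cf: "continuous_map Z X f" using fib unfolding fibration_def by blast
  have a: "p \<in> topspace Z" "pathin Y \<delta>" "\<delta> 0 = dag" "\<delta> 1 = i p" "pathin X \<gamma>" "\<gamma> 0 = f p" "\<gamma> 1 = star"
    using tr by (auto simp: TR_iff)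
  obtain \<epsilon> where \<epsilon>: "pathin Z \<epsilon>" "\<epsilon> 0 = p" "\<forall>t\<in>{0..1}. f (\<epsilon> t) = \<gamma> t"
    using path_lift[OF fib a(5) a(1) a(6)[symmetric]] by blast
  have s1: "((\<delta>, p, \<gamma>), (\<delta> #\<^sub>p (i \<circ> \<epsilon>), \<epsilon> 1, (\<lambda>x. f (\<epsilon> (1 - x))) #\<^sub>p \<gamma>)) \<in> triple_rel Y Z X f i dag star"
    by (rule T_stepB[OF ci cf tr \<epsilon>(1,2)])
  have tr1: "(\<delta> #\<^sub>p (i \<circ> \<epsilon>), \<epsilon> 1, (\<lambda>x. f (\<epsilon> (1 - x))) #\<^sub>p \<gamma>) \<in> triples Y Z X f i dag star"
    using s1 unfolding T_iff by blast
  have hs: "homotopic_rel_ends X ((\<lambda>x. f (\<epsilon> (1 - x))) #\<^sub>p \<gamma>) (\<lambda>_. star)"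
  proof (rule hre_eq[OF hre_linv[OF a(5)]])
    show "((\<lambda>x. f (\<epsilon> (1 - x))) #\<^sub>p \<gamma>) x = ((\<lambda>x. \<gamma> (1 - x)) #\<^sub>p \<gamma>) x" if "x \<in> {0..1}" for x :: real
    proof (cases "x \<le> 1/2")
      case True then have "1 - 2*x \<in> {0..1}" using that by auto
      then show ?thesis using True \<epsilon>(3) by (simp add: pjoin_def)
    next
      case False then show ?thesis by (simp add: pjoin_def)
    qed
    show "star = \<gamma> 1" if "x \<in> {0..1}" for x :: real using a(7) by simp
  qed
  have s2: "((\<delta> #\<^sub>p (i \<circ> \<epsilon>), \<epsilon> 1, (\<lambda>x. f (\<epsilon> (1 - x))) #\<^sub>p \<gamma>), (\<delta> #\<^sub>p (i \<circ> \<epsilon>), \<epsilon> 1, \<lambda>_. star)) \<in> triple_rel Y Z X f i dag star"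
    by (rule T_stepA'[OF tr1 hs])
  have tr2: "(\<delta> #\<^sub>p (i \<circ> \<epsilon>), \<epsilon> 1, \<lambda>_. star) \<in> triples Y Z X f i dag star"
    using s2 unfolding T_iff by blast
  have rp: "(\<delta> #\<^sub>p (i \<circ> \<epsilon>), \<epsilon> 1) \<in> red_pairs Y Z f i dag star"
    using tr2 \<epsilon>(3) a(7) by (auto simp: TR_iff RP_iff)
  show ?thesis using rp T_sym[OF T_trans[OF s1 s2]] by blast
qed

lemma part2:
  fixes Z :: "'z topology" and X :: "'x topology" and Y :: "'y topology" and f :: "'z \<Rightarrow> 'x" and i :: "'z \<Rightarrow> 'y"
  assumes fib: "fibration Z X f" and ci: "continuous_map Z Y i" and star: "star \<in> topspace X"
  shows "equiv (red_pairs Y Z f i dag star) (red_rel Y Z f i dag star) \<and>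
       bij_betw
         (\<lambda>C. \<Union>(\<delta>, p)\<in>C. triple_rel Y Z X f i dag star `` {(\<delta>, p, \<lambda>_. star)})
         (red_pairs Y Z f i dag star // red_rel Y Z f i dag star)
         (biset_corr Y Z X f i dag star)"
proof
  have cf: "continuous_map Z X f" using fib unfolding fibration_def by blast
  show "equiv (red_pairs Y Z f i dag star) (red_rel Y Z f i dag star)" by (rule equiv_RR[OF ci])
  show "bij_betw
         (\<lambda>C. \<Union>(\<delta>, p)\<in>C. triple_rel Y Z X f i dag star `` {(\<delta>, p, \<lambda>_. star)})
         (red_pairs Y Z f i dag star // red_rel Y Z f i dag star)
         (biset_corr Y Z X f i dag star)"
    unfolding biset_corr_def
    apply (rule quot_bij[OF equiv_RR[OF ci] equiv_T, where \<phi>="\<lambda>(\<delta>, p). (\<delta>, p, \<lambda>_. star)"])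
    subgoal for a by (cases a) simp
    subgoal for a using P2_B star by (cases a) simp
    subgoal for a a' using P2_wd[OF ci cf star] by (cases a; cases a') simp
    subgoal for a a' using part2_inj[OF fib ci] by (cases a; cases a') simp
    subgoal for b
    proof -
      assume b: "b \<in> triples Y Z X f i dag star"
      obtain \<delta> p \<gamma> where bb: "b = (\<delta>, p, \<gamma>)" by (cases b)
      obtain \<delta>0 p0 where "(\<delta>0, p0) \<in> red_pairs Y Z f i dag star"
        "((\<delta>0, p0, \<lambda>_. star), (\<delta>, p, \<gamma>)) \<in> triple_rel Y Z X f i dag star"
        using P2_sur[OF fib ci b[unfolded bb]] by blast
      then show ?thesis unfolding bb by force
    qed
    done
qed

theorem mainTheorem15:
  fixes Z :: "'z topology" and X :: "'x topology" and Y :: "'y topology"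
    and f :: "'z \<Rightarrow> 'x" and i :: "'z \<Rightarrow> 'y" and star :: 'x
  assumes fib: "fibration Z X f"
    and cont_i: "continuous_map Z Y i"
    and star: "star \<in> topspace X"
  shows
   "(\<forall>dag \<in> topspace Z.
       equiv (fib_paths Z f dag star) (fib_rel Z f dag star) \<and>
       bij_betw
         (\<lambda>C. \<Union>\<beta>\<in>C. path_htp_rel X (Bpaths X f dag star) `` {f \<circ> \<beta>})
         (fib_paths Z f dag star // fib_rel Z f dag star)
         (biset X f dag star))
    \<and>
    (\<forall>dag \<in> topspace Y.
       equiv (red_pairs Y Z f i dag star) (red_rel Y Z f i dag star) \<and>
       bij_betw
         (\<lambda>C. \<Union>(\<delta>, p)\<in>C. triple_rel Y Z X f i dag star `` {(\<delta>, p, \<lambda>_. star)})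
         (red_pairs Y Z f i dag star // red_rel Y Z f i dag star)
         (biset_corr Y Z X f i dag star))"
  using part1[OF fib star] part2[OF fib cont_i star] by blast

end
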